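(* Let $K\in\mathcal{B}(H)$ and let $\Lambda_{TU}=\{(F(x),\Lambda_x,v(x))\}_{x\in X}$ be a continuous $(T,U)$-controlled $K$-$g$-fusion frame for $H$ with (positive) frame operator $S_C$. Let $V\in\mathcal{B}(H)$ be invertible such that $V^*$ commutes with $T$ and with $U$. Then the following are equivalent: (i) $\Gamma_{TU}=\{(VF(x),\Lambda_xP_{F(x)}V^*,v(x))\}_{x\in X}$ is a continuous $(T,U)$-controlled $VK$-$g$-fusion frame for $H$, i.e. there exist $0<A'\le B'<\infty$ with $$A'\|(VK)^*f\|^2\le\int_X v(x)^2\langle\Lambda_xP_{F(x)}V^*P_{VF(x)}Uf,\;\Lambda_xP_{F(x)}V^*P_{VF(x)}Tf\rangle\,d\mu(x)\le B'\|f\|^2\quad(f\in H);$$ (ii) the quotient operator $[(VK)^*/S_C^{1/2}V^*]$ is bounded; (iii) the quotient operator $[(VK)^*/(VS_CV^* )^{1/2}]$ is bounded.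
   Context: $H$ is a separable complex Hilbert space, $\mathcal{B}(H)$ the bounded operators on $H$, $\mathcal{GB}^+(H)$ the positive bounded operators on $H$ with bounded inverse, $P_M$ the orthogonal projection onto a closed subspace $M$. Let $(X,\mu)$ be a measure space, $\{K_x\}_{x\in X}$ Hilbert spaces, $v:X\to\mathbb{R}^+$ measurable, $F$ a map from $X$ to closed subspaces of $H$ with $x\mapsto P_{F(x)}f$ weakly measurable for all $f$, $\Lambda_x\in\mathcal{B}(F(x),K_x)$, and $T,U\in\mathcal{GB}^+(H)$. For $L\in\mathcal{B}(H)$, the family is a continuous $(T,U)$-controlled $L$-$g$-fusion frame for $H$ if there exist $0<A\le B<\infty$ with $A\|L^*f\|^2\le\int_X v(x)^2\langle\Lambda_xP_{F(x)}Uf,\Lambda_xP_{F(x)}Tf\rangle d\mu(x)\le B\|f\|^2$ for all $f\in H$. Its frame operator $S_C\in\mathcal{B}(H)$ is given by $\langle S_Cf,g\rangle=\int_X v(x)^2\langle T^*P_{F(x)}\Lambda_x^*\Lambda_xP_{F(x)}Uf,g\rangle d\mu(x)$. For $A_1,A_2\in\mathcal{B}(H)$, the quotient operator $[A_1/A_2]$ is the map $A_2f\mapsto A_1f$ from $\mathcal{R}(A_2)$ to $\mathcal{R}(A_1)$; it is bounded if it is well defined and there is $C>0$ with $\|A_1f\|\le C\|A_2f\|$ for all $f\in H$. *)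

theory Defs
  imports "HOL-Analysis.Analysis"
begin

text \<open>A complex inner product space: a real normed vector space with a compatible
  complex scalar multiplication and a complex inner product, linear in the FIRST
  argument and conjugate-linear in the second, inducing the norm.\<close>

class complex_inner = real_normed_vector +
  fixes scaleC :: "complex \<Rightarrow> 'a \<Rightarrow> 'a"
    and cinner :: "'a \<Rightarrow> 'a \<Rightarrow> complex"
  assumes scaleC_add_right: "scaleC a (x + y) = scaleC a x + scaleC a y"
    and scaleC_add_left: "scaleC (a + b) x = scaleC a x + scaleC b x"
    and scaleC_scaleC: "scaleC a (scaleC b x) = scaleC (a * b) x"
    and scaleC_one: "scaleC 1 x = x"
    and scaleR_scaleC: "scaleR r x = scaleC (complex_of_real r) x"
    and cinner_add_left: "cinner (x + y) z = cinner x z + cinner y z"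
    and cinner_scaleC_left: "cinner (scaleC a x) y = a * cinner x y"
    and cinner_commute: "cinner x y = cnj (cinner y x)"
    and cinner_self_norm: "cinner x x = complex_of_real ((norm x)\<^sup>2)"

class chilbert_space = complex_inner + complete_space

definition clinear_op :: "('a::complex_inner \<Rightarrow> 'b::complex_inner) \<Rightarrow> bool" where
  "clinear_op A \<longleftrightarrow> (\<forall>x y. A (x + y) = A x + A y) \<and> (\<forall>c x. A (scaleC c x) = scaleC c (A x))"

definition bounded_op :: "('a::complex_inner \<Rightarrow> 'b::complex_inner) \<Rightarrow> bool" where
  "bounded_op A \<longleftrightarrow> clinear_op A \<and> (\<exists>C. \<forall>x. norm (A x) \<le> C * norm x)"

definition adj :: "('a::complex_inner \<Rightarrow> 'b::complex_inner) \<Rightarrow> 'b \<Rightarrow> 'a" where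
  "adj A = (THE B. \<forall>x y. cinner (A x) y = cinner x (B y))"

definition positive_op :: "('a::complex_inner \<Rightarrow> 'a) \<Rightarrow> bool" where
  "positive_op A \<longleftrightarrow> bounded_op A \<and>
     (\<forall>x. Im (cinner (A x) x) = 0 \<and> Re (cinner (A x) x) \<ge> 0)"

definition pos_invertible_op :: "('a::complex_inner \<Rightarrow> 'a) \<Rightarrow> bool" where
  "pos_invertible_op A \<longleftrightarrow> positive_op A \<and> bij A \<and> bounded_op (inv A)"

definition invertible_op :: "('a::complex_inner \<Rightarrow> 'a) \<Rightarrow> bool" where
  "invertible_op A \<longleftrightarrow> bounded_op A \<and> bij A \<and> bounded_op (inv A)"

definition op_sqrt :: "('a::complex_inner \<Rightarrow> 'a) \<Rightarrow> 'a \<Rightarrow> 'a" where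
  "op_sqrt A = (THE R. positive_op R \<and> R \<circ> R = A)"

definition closed_csubspace :: "'a::complex_inner set \<Rightarrow> bool" where
  "closed_csubspace M \<longleftrightarrow> closed M \<and> 0 \<in> M \<and> (\<forall>x\<in>M. \<forall>y\<in>M. x + y \<in> M)
     \<and> (\<forall>c. \<forall>x\<in>M. scaleC c x \<in> M)"

definition proj :: "'a::complex_inner set \<Rightarrow> 'a \<Rightarrow> 'a" where
  "proj M x = (THE y. y \<in> M \<and> (\<forall>m\<in>M. cinner (x - y) m = 0))"

text \<open>The quotient operator [A1/A2] : A2 f \<mapsto> A1 f is bounded: it is well defined
  and there is C > 0 with norm (A1 f) \<le> C * norm (A2 f) for all f.\<close>
definition quotient_op_bounded :: "('a \<Rightarrow> 'b::real_normed_vector) \<Rightarrow> ('a \<Rightarrow> 'c::real_normed_vector) \<Rightarrow> bool" where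
  "quotient_op_bounded A1 A2 \<longleftrightarrow>
     (\<forall>f g. A2 f = A2 g \<longrightarrow> A1 f = A1 g) \<and> (\<exists>C>0. \<forall>f. norm (A1 f) \<le> C * norm (A2 f))"

definition cgf_integrand ::
  "('x \<Rightarrow> real) \<Rightarrow> ('x \<Rightarrow> 'a::complex_inner set) \<Rightarrow> ('x \<Rightarrow> 'a \<Rightarrow> 'k::complex_inner)
   \<Rightarrow> ('a \<Rightarrow> 'a) \<Rightarrow> ('a \<Rightarrow> 'a) \<Rightarrow> 'a \<Rightarrow> 'x \<Rightarrow> complex" where
  "cgf_integrand v F \<Lambda> T U f x =
     complex_of_real ((v x)\<^sup>2) * cinner (\<Lambda> x (proj (F x) (U f))) (\<Lambda> x (proj (F x) (T f)))"

definition ctrl_L_gfusion_frame ::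
  "'x measure \<Rightarrow> ('x \<Rightarrow> real) \<Rightarrow> ('x \<Rightarrow> 'a::complex_inner set) \<Rightarrow> ('x \<Rightarrow> 'a \<Rightarrow> 'k::complex_inner)
   \<Rightarrow> ('a \<Rightarrow> 'a) \<Rightarrow> ('a \<Rightarrow> 'a) \<Rightarrow> ('a \<Rightarrow> 'a) \<Rightarrow> bool" where
  "ctrl_L_gfusion_frame M v F \<Lambda> T U L \<longleftrightarrow>
     (\<exists>A B. 0 < A \<and> A \<le> B \<and>
        (\<forall>f. integrable M (cgf_integrand v F \<Lambda> T U f) \<and>
             Im (integral\<^sup>L M (cgf_integrand v F \<Lambda> T U f)) = 0 \<and>
             A * (norm (adj L f))\<^sup>2 \<le> Re (integral\<^sup>L M (cgf_integrand v F \<Lambda> T U f)) \<and>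
             Re (integral\<^sup>L M (cgf_integrand v F \<Lambda> T U f)) \<le> B * (norm f)\<^sup>2))"

definition is_ctrl_frame_operator ::
  "'x measure \<Rightarrow> ('x \<Rightarrow> real) \<Rightarrow> ('x \<Rightarrow> 'a::complex_inner set) \<Rightarrow> ('x \<Rightarrow> 'a \<Rightarrow> 'k::complex_inner)
   \<Rightarrow> ('a \<Rightarrow> 'a) \<Rightarrow> ('a \<Rightarrow> 'a) \<Rightarrow> ('a \<Rightarrow> 'a) \<Rightarrow> bool" where
  "is_ctrl_frame_operator M v F \<Lambda> T U S \<longleftrightarrow> bounded_op S \<and>
     (\<forall>f g. cinner (S f) g =
        (LINT x|M. complex_of_real ((v x)\<^sup>2) *
           cinner (adj T (proj (F x) (adj (\<Lambda> x) (\<Lambda> x (proj (F x) (U f)))))) g))"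

end

theory Submission
  imports Defs
begin


lemma scaleC_zero_left[simp]: "scaleC 0 (x::'a::complex_inner) = 0"
  by (metis scaleR_scaleC scaleR_zero_left of_real_0)
lemma scaleC_zero_right[simp]: "scaleC a (0::'a::complex_inner) = 0"
  by (metis add_cancel_right_right scaleC_add_right add_0)
lemma scaleC_minus_right: "scaleC a (- (x::'a::complex_inner)) = - scaleC a x"
proof -
  have "scaleC a (- x) + scaleC a x = scaleC a (-x + x)" by (rule scaleC_add_right[symmetric])
  then have h: "scaleC a (- x) + scaleC a x = 0" by simp
  show ?thesis using h by (simp add: eq_neg_iff_add_eq_0)
qed
lemma scaleC_diff_right: "scaleC a ((x::'a::complex_inner) - y) = scaleC a x - scaleC a y"
  unfolding diff_conv_add_uminus by (simp only: scaleC_add_right scaleC_minus_right)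
lemma scaleC_minus_left: "scaleC (- a) (x::'a::complex_inner) = - scaleC a x"
proof -
  have "scaleC (- a) x + scaleC a x = scaleC (-a + a) x" by (rule scaleC_add_left[symmetric])
  also have "\<dots> = 0" by simp
  finally have h: "scaleC (- a) x + scaleC a x = 0" .
  show ?thesis using h by (simp add: eq_neg_iff_add_eq_0)
qed
lemma scaleC_diff_left: "scaleC (a - b) (x::'a::complex_inner) = scaleC a x - scaleC b x"
  unfolding diff_conv_add_uminus by (simp only: scaleC_add_left scaleC_minus_left)
lemma scaleC_minus1: "scaleC (-1) (x::'a::complex_inner) = - x"
  by (simp add: scaleC_minus_left scaleC_one)

lemma cinner_zero_left[simp]: "cinner 0 (x::'a::complex_inner) = 0"
  by (metis add_cancel_right_right cinner_add_left add_0)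
lemma cinner_add_right: "cinner (x::'a::complex_inner) (y + z) = cinner x y + cinner x z"
  by (metis cinner_commute cinner_add_left complex_cnj_add)
lemma cinner_zero_right[simp]: "cinner (x::'a::complex_inner) 0 = 0"
  by (metis cinner_commute cinner_zero_left complex_cnj_zero)
lemma cinner_scaleC_right: "cinner (x::'a::complex_inner) (scaleC a y) = cnj a * cinner x y"
  by (metis cinner_commute cinner_scaleC_left complex_cnj_mult)
lemma cinner_minus_left: "cinner (- x) (y::'a::complex_inner) = - cinner x y"
proof -
  have "cinner (- x) y + cinner x y = cinner (-x + x) y" by (rule cinner_add_left[symmetric])
  then have h: "cinner (- x) y + cinner x y = 0" by simp
  show ?thesis using h by (simp add: eq_neg_iff_add_eq_0)
qed
lemma cinner_minus_right: "cinner y (- x::'a::complex_inner) = - cinner y x"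
proof -
  have "cinner y (- x) + cinner y x = cinner y (-x + x)" by (rule cinner_add_right[symmetric])
  then have h: "cinner y (- x) + cinner y x = 0" by simp
  show ?thesis using h by (simp add: eq_neg_iff_add_eq_0)
qed
lemma cinner_diff_left: "cinner (x - y) (z::'a::complex_inner) = cinner x z - cinner y z"
  unfolding diff_conv_add_uminus by (simp only: cinner_add_left cinner_minus_left)
lemma cinner_diff_right: "cinner z (x - y::'a::complex_inner) = cinner z x - cinner z y"
  unfolding diff_conv_add_uminus by (simp only: cinner_add_right cinner_minus_right)
lemma cinner_scaleR_left: "cinner (scaleR r x) (y::'a::complex_inner) = of_real r * cinner x y"
  by (simp add: scaleR_scaleC cinner_scaleC_left)
lemma cinner_scaleR_right: "cinner y (scaleR r x::'a::complex_inner) = of_real r * cinner y x"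
  by (simp add: scaleR_scaleC cinner_scaleC_right)

lemma cinner_self_Re: "Re (cinner x (x::'a::complex_inner)) = (norm x)\<^sup>2"
  by (simp add: cinner_self_norm)
lemma cinner_self_Im: "Im (cinner x (x::'a::complex_inner)) = 0"
  by (simp add: cinner_self_norm)
lemma cinner_self_eq0: "cinner x x = 0 \<longleftrightarrow> (x::'a::complex_inner) = 0"
  by (simp add: cinner_self_norm)

lemma norm_scaleC: "norm (scaleC a (x::'a::complex_inner)) = cmod a * norm x"
proof -
  have "cinner (scaleC a x) (scaleC a x) = a * cnj a * cinner x x"
    by (simp add: cinner_scaleC_left cinner_scaleC_right mult.assoc)
  also have "a * cnj a = complex_of_real ((cmod a)\<^sup>2)" by (rule complex_norm_square[symmetric])
  finally have "complex_of_real ((norm (scaleC a x))\<^sup>2) = complex_of_real ((cmod a)\<^sup>2 * (norm x)\<^sup>2)"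
    unfolding cinner_self_norm of_real_mult .
  then have "(norm (scaleC a x))\<^sup>2 = ((cmod a)\<^sup>2) * (norm x)\<^sup>2"
    using of_real_eq_iff by blast
  then have "(norm (scaleC a x))\<^sup>2 = (cmod a * norm x)\<^sup>2" by (simp add: power_mult_distrib)
  then show ?thesis by (simp add: power2_eq_iff_nonneg)
qed

lemma cinner_cs: "cmod (cinner x (y::'a::complex_inner)) \<le> norm x * norm y"
proof (cases "y = 0")
  case True then show ?thesis by simp
next
  case False
  define t where "t = cinner x y / cinner y y"
  have yy: "cinner y y = of_real ((norm y)^2)" by (simp add: cinner_self_norm)
  have ny: "norm y > 0" using False by simp
  have "complex_of_real ((norm (x - scaleC t y))\<^sup>2) = cinner (x - scaleC t y) (x - scaleC t y)"
    by (simp add: cinner_self_norm)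
  also have "\<dots> = cinner x x - cnj t * cinner x y - t * cinner y x + t * cnj t * cinner y y"
    by (simp add: cinner_diff_left cinner_diff_right cinner_scaleC_left cinner_scaleC_right algebra_simps)
  also have "\<dots> = cinner x x - cinner x y * cnj (cinner x y) / cinner y y"
    using False yy unfolding t_def
    apply (subst cinner_commute[of y x])
    by (simp add: cinner_self_eq0 field_simps)
  finally have eq: "complex_of_real ((norm (x - scaleC t y))\<^sup>2) = cinner x x - cinner x y * cnj (cinner x y) / cinner y y" .
  have "0 \<le> Re (complex_of_real ((norm (x - scaleC t y))\<^sup>2))" by simp
  then have "0 \<le> Re (cinner x x - cinner x y * cnj (cinner x y) / cinner y y)"
    by (simp only: eq)
  also have "cinner x y * cnj (cinner x y) / cinner y y = of_real ((cmod (cinner x y))\<^sup>2 / (norm y)\<^sup>2)"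
    by (simp only: yy complex_norm_square[symmetric] of_real_divide)
  finally have "(cmod (cinner x y))\<^sup>2 / (norm y)\<^sup>2 \<le> (norm x)\<^sup>2" by (simp add: cinner_self_Re)
  then have "(cmod (cinner x y))\<^sup>2 \<le> (norm x * norm y)\<^sup>2" using ny
    by (simp add: field_simps power_mult_distrib)
  then show ?thesis by (meson norm_ge_zero mult_nonneg_nonneg power2_le_imp_le)
qed

lemma norm_expand: "(norm (x + y::'a::complex_inner))\<^sup>2 = (norm x)\<^sup>2 + (norm y)\<^sup>2 + 2 * Re (cinner x y)"
proof -
  have "cinner (x+y) (x+y) = cinner x x + cinner y y + cinner x y + cinner y x"
    by (simp add: cinner_add_left cinner_add_right)
  then have "complex_of_real ((norm (x+y))\<^sup>2) = cinner x x + cinner y y + cinner x y + cinner y x"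
    by (simp only: cinner_self_norm)
  then have "(norm (x+y))\<^sup>2 = Re (cinner x x + cinner y y + cinner x y + cinner y x)"
    by (metis Re_complex_of_real)
  then show ?thesis by (subst (asm) cinner_commute[of y x]) (simp add: cinner_self_Re)
qed

lemma cinner_ext_eq: "(\<And>z. cinner z x = cinner z (y::'a::complex_inner)) \<Longrightarrow> x = y"
  by (metis cinner_diff_right cinner_self_eq0 eq_iff_diff_eq_0)


lemma csub_scaleR: "closed_csubspace M \<Longrightarrow> x \<in> M \<Longrightarrow> scaleR r x \<in> M"
  unfolding closed_csubspace_def by (simp add: scaleR_scaleC)
lemma csub_add: "closed_csubspace M \<Longrightarrow> x \<in> M \<Longrightarrow> y \<in> M \<Longrightarrow> x + y \<in> M"
  unfolding closed_csubspace_def by simp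
lemma csub_scaleC: "closed_csubspace M \<Longrightarrow> x \<in> M \<Longrightarrow> scaleC c x \<in> M"
  unfolding closed_csubspace_def by simp
lemma csub_0: "closed_csubspace M \<Longrightarrow> 0 \<in> M"
  unfolding closed_csubspace_def by simp
lemma csub_minus: "closed_csubspace M \<Longrightarrow> x \<in> M \<Longrightarrow> - x \<in> M"
  using csub_scaleR[of M x "-1"] by simp
lemma csub_diff: "closed_csubspace M \<Longrightarrow> x \<in> M \<Longrightarrow> y \<in> M \<Longrightarrow> x - y \<in> M"
  using csub_add[of M x "-y"] csub_minus[of M y] by simp

lemma parallelogram: "(norm (a + b::'a::complex_inner))\<^sup>2 + (norm (a - b))\<^sup>2 = 2 * (norm a)\<^sup>2 + 2 * (norm b)\<^sup>2"
proof -
  have "(norm (a + - b))\<^sup>2 = (norm a)\<^sup>2 + (norm b)\<^sup>2 + 2 * Re (cinner a (- b))"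
    using norm_expand[of a "-b"] by simp
  then show ?thesis using norm_expand[of a b] by (simp add: cinner_minus_right)
qed

lemma orth_from_min:
  fixes z m :: "'a::complex_inner"
  assumes "\<And>t. (norm z)\<^sup>2 \<le> (norm (z - scaleC t m))\<^sup>2"
  shows "cinner z m = 0"
proof -
  define c where "c = cinner z m"
  define s where "s = 1 / ((norm m)\<^sup>2 + 1)"
  have s0: "s > 0" unfolding s_def by (simp add: add_nonneg_pos)
  define t where "t = complex_of_real s * c"
  have "(norm (z + - scaleC t m))\<^sup>2 = (norm z)\<^sup>2 + (norm (scaleC t m))\<^sup>2 + 2 * Re (cinner z (- scaleC t m))"
    using norm_expand[of z "- scaleC t m"] by simp
  also have "cinner z (- scaleC t m) = - (cnj t * c)"
    by (simp add: cinner_minus_right cinner_scaleC_right c_def)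
  also have "cnj t * c = complex_of_real (s * (cmod c)\<^sup>2)"
  proof -
    have "cnj c * c = complex_of_real ((cmod c)\<^sup>2)" using complex_norm_square[of c] by (simp add: mult.commute)
    then show ?thesis unfolding t_def by (simp add: mult.assoc)
  qed
  also have "norm (scaleC t m) = s * cmod c * norm m"
    by (simp add: norm_scaleC t_def norm_mult abs_of_pos[OF s0])
  finally have "(norm (z - scaleC t m))\<^sup>2 = (norm z)\<^sup>2 + (s * cmod c * norm m)\<^sup>2 - 2 * (s * (cmod c)\<^sup>2)"
    by simp
  with assms[of t] have "2 * (s * (cmod c)\<^sup>2) \<le> (s * cmod c * norm m)\<^sup>2" by simp
  then have "2 * (s * (cmod c)\<^sup>2) \<le> s * (cmod c)\<^sup>2 * (s * (norm m)\<^sup>2)"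
    by (simp add: power_mult_distrib power2_eq_square algebra_simps)
  moreover have "s * (norm m)\<^sup>2 < 1"
  proof -
    have p: "(norm m)\<^sup>2 + 1 > 0" by (simp add: add_nonneg_pos)
    have "(norm m)\<^sup>2 < (norm m)\<^sup>2 + 1" by simp
    then show ?thesis unfolding s_def using p by (simp add: divide_less_eq)
  qed
  ultimately have "(cmod c)\<^sup>2 \<le> 0"
    using s0 by (smt (verit) mult_le_cancel_left1 mult_pos_pos zero_le_power2 zero_less_power2)
  then show ?thesis unfolding c_def by simp
qed

lemma proj_exists:
  fixes M :: "'a::chilbert_space set"
  assumes M: "closed_csubspace M"
  shows "\<exists>y. y \<in> M \<and> (\<forall>m\<in>M. cinner (x - y) m = 0)"
proof -
  define D where "D = (\<lambda>m. (norm (x - m))\<^sup>2) ` M"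
  define d where "d = Inf D"
  have Dne: "D \<noteq> {}" using csub_0[OF M] unfolding D_def by auto
  have Dbdd: "bdd_below D" unfolding D_def by (rule bdd_belowI[of _ 0]) auto
  have dle: "\<And>m. m \<in> M \<Longrightarrow> d \<le> (norm (x - m))\<^sup>2"
    unfolding d_def D_def by (rule cInf_lower) (use Dbdd D_def in auto)
  have "\<forall>n. \<exists>m\<in>M. (norm (x - m))\<^sup>2 < d + 1 / (real n + 1)"
  proof
    fix n
    have "Inf D < d + 1 / (real n + 1)" unfolding d_def by (simp add: add_pos_pos)
    from cInf_lessD[OF Dne this] show "\<exists>m\<in>M. (norm (x - m))\<^sup>2 < d + 1 / (real n + 1)"
      unfolding D_def by auto
  qed
  then obtain y where yM: "\<And>n. y n \<in> M" and yd: "\<And>n. (norm (x - y n))\<^sup>2 < d + 1 / (real n + 1)"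
    by metis
  have key: "(norm (y n - y k))\<^sup>2 \<le> 2 / (real n + 1) + 2 / (real k + 1)" for n k
  proof -
    have mid: "scaleR (1/2) (y n + y k) \<in> M"
      by (rule csub_scaleR[OF M]) (rule csub_add[OF M yM yM])
    have h: "scaleR (1/2) x + scaleR (1/2) x = x" by (simp flip: scaleR_add_left)
    have "x - scaleR (1/2) (y n + y k) = scaleR (1/2) ((x - y n) + (x - y k))"
      using h by (simp add: algebra_simps)
    then have "(norm ((x - y n) + (x - y k)))\<^sup>2 = 4 * (norm (x - scaleR (1/2) (y n + y k)))\<^sup>2"
      by (simp add: power2_eq_square)
    moreover have "(x - y n) - (x - y k) = y k - y n" by simp
    ultimately have "4 * (norm (x - scaleR (1/2) (y n + y k)))\<^sup>2 + (norm (y k - y n))\<^sup>2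
        = 2 * (norm (x - y n))\<^sup>2 + 2 * (norm (x - y k))\<^sup>2"
      using parallelogram[of "x - y n" "x - y k"] by simp
    moreover have "d \<le> (norm (x - scaleR (1/2) (y n + y k)))\<^sup>2" using dle[OF mid] .
    ultimately have "(norm (y k - y n))\<^sup>2 \<le> 2 * (norm (x - y n))\<^sup>2 + 2 * (norm (x - y k))\<^sup>2 - 4 * d"
      by linarith
    also have "\<dots> \<le> 2 * (d + 1 / (real n + 1)) + 2 * (d + 1 / (real k + 1)) - 4 * d"
      using yd[of n] yd[of k] by (smt (verit))
    finally show ?thesis by (simp add: norm_minus_commute)
  qed
  have "Cauchy y"
  proof (rule metric_CauchyI)
    fix e :: real assume e: "e > 0"
    obtain N :: nat where N: "4 / (e\<^sup>2) < real N" using reals_Archimedean2 by blast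
    show "\<exists>N. \<forall>m\<ge>N. \<forall>n\<ge>N. dist (y m) (y n) < e"
    proof (intro exI allI impI)
      fix m n assume m: "m \<ge> N" and n: "n \<ge> N"
      have e2: "e\<^sup>2 > 0" using e by simp
      have "2 / (real m + 1) \<le> 2 / (real N + 1)" using m by (simp add: frac_le)
      moreover have "2 / (real n + 1) \<le> 2 / (real N + 1)" using n by (simp add: frac_le)
      moreover have "4 / (real N + 1) < e\<^sup>2"
      proof -
        have "4 < e\<^sup>2 * real N" using N e2 by (simp add: field_simps)
        then have "4 < e\<^sup>2 * (real N + 1)" using e2 by (smt (verit) mult_nonneg_nonneg distrib_left zero_le_power2 mult_cancel_left1)
        then show ?thesis by (simp add: field_simps)
      qed
      ultimately have "(norm (y m - y n))\<^sup>2 < e\<^sup>2" using key[of m n] by linarith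
      then have "norm (y m - y n) < e" using e by (simp add: power_less_imp_less_base)
      then show "dist (y m) (y n) < e" by (simp add: dist_norm)
    qed
  qed
  then obtain z where yz: "y \<longlonglongrightarrow> z" using convergent_eq_Cauchy convergent_def by blast
  have zM: "z \<in> M" using M unfolding closed_csubspace_def
    using closed_sequentially yM yz by blast
  have "(\<lambda>n. (norm (x - y n))\<^sup>2) \<longlonglongrightarrow> (norm (x - z))\<^sup>2"
    by (intro tendsto_intros yz)
  moreover have "(\<lambda>n. d + 1 / (real n + 1)) \<longlonglongrightarrow> d + 0"
  proof -
    have "(\<lambda>n. 1 / (real n + 1)) = (\<lambda>n. inverse (real (Suc n)))" by (simp add: inverse_eq_divide add.commute)
    then have "(\<lambda>n. 1 / (real n + 1)) \<longlonglongrightarrow> 0" using LIMSEQ_inverse_real_of_nat by simp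
    then show ?thesis by (intro tendsto_intros)
  qed
  ultimately have zd: "(norm (x - z))\<^sup>2 \<le> d"
    using yd by (intro LIMSEQ_le[where X="\<lambda>n. (norm (x - y n))\<^sup>2"]) (auto intro: less_imp_le)
  have "\<forall>m\<in>M. cinner (x - z) m = 0"
  proof
    fix m assume m: "m \<in> M"
    show "cinner (x - z) m = 0"
    proof (rule orth_from_min)
      fix t
      have "z + scaleC t m \<in> M" by (rule csub_add[OF M zM csub_scaleC[OF M m]])
      from dle[OF this] zd have "(norm (x - z))\<^sup>2 \<le> (norm (x - (z + scaleC t m)))\<^sup>2"
        by linarith
      then show "(norm (x - z))\<^sup>2 \<le> (norm (x - z - scaleC t m))\<^sup>2"
        by (simp only: diff_diff_eq)
    qed
  qed
  with zM show ?thesis by blast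
qed

lemma proj_unique:
  fixes M :: "'a::complex_inner set"
  assumes M: "closed_csubspace M"
    and "y \<in> M" "\<forall>m\<in>M. cinner (x - y) m = 0" "y' \<in> M" "\<forall>m\<in>M. cinner (x - y') m = 0"
  shows "y = y'"
proof -
  have d: "y - y' \<in> M" using csub_diff[OF M] assms by blast
  have "cinner (x - y') (y - y') - cinner (x - y) (y - y') = 0" using assms d by simp
  then have "cinner (y - y') (y - y') = 0" by (simp add: cinner_diff_left)
  then show ?thesis by (simp add: cinner_self_eq0)
qed

lemma proj_props:
  fixes M :: "'a::chilbert_space set"
  assumes M: "closed_csubspace M"
  shows "proj M x \<in> M" "\<And>m. m \<in> M \<Longrightarrow> cinner (x - proj M x) m = 0"
proof -
  obtain y where y: "y \<in> M" "\<forall>m\<in>M. cinner (x - y) m = 0" using proj_exists[OF M] by blast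
  have "proj M x = y" unfolding proj_def
    by (rule the_equality) (use y proj_unique[OF M] in blast)+
  then show "proj M x \<in> M" "\<And>m. m \<in> M \<Longrightarrow> cinner (x - proj M x) m = 0" using y by auto
qed

lemma proj_eqI:
  fixes M :: "'a::chilbert_space set"
  assumes M: "closed_csubspace M" and "y \<in> M" "\<And>m. m \<in> M \<Longrightarrow> cinner (x - y) m = 0"
  shows "proj M x = y"
  using proj_unique[OF M] proj_props[OF M] assms by blast

lemma proj_selfadj:
  fixes M :: "'a::chilbert_space set"
  assumes M: "closed_csubspace M"
  shows "cinner (proj M x) y = cinner x (proj M y)"
proof -
  have "cinner (x - proj M x) (proj M y) = 0" by (rule proj_props(2)[OF M proj_props(1)[OF M]])
  moreover have "cinner (proj M x) (y - proj M y) = 0"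
    using proj_props(2)[OF M proj_props(1)[OF M], of y x] by (subst cinner_commute) simp
  ultimately show ?thesis by (simp add: cinner_diff_left cinner_diff_right)
qed


lemma clinear_add: "clinear_op A \<Longrightarrow> A (x + y) = A x + A y"
  unfolding clinear_op_def by blast
lemma clinear_scaleC: "clinear_op A \<Longrightarrow> A (scaleC c x) = scaleC c (A x)"
  unfolding clinear_op_def by blast
lemma clinear_0: "clinear_op A \<Longrightarrow> A 0 = 0"
  using clinear_scaleC[of A 0 0] by simp
lemma clinear_minus: "clinear_op A \<Longrightarrow> A (- x) = - A x"
  using clinear_scaleC[of A "-1" x] by (simp add: scaleC_minus1)
lemma clinear_diff: "clinear_op A \<Longrightarrow> A (x - y) = A x - A y"
  using clinear_add[of A x "-y"] clinear_minus[of A y] by simp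
lemma clinear_scaleR: "clinear_op A \<Longrightarrow> A (scaleR r x) = scaleR r (A x)"
  by (simp add: scaleR_scaleC clinear_scaleC)

lemma bounded_op_linear: "bounded_op A \<Longrightarrow> clinear_op A"
  unfolding bounded_op_def by simp
lemma bounded_op_bound:
  fixes A :: "'a::complex_inner \<Rightarrow> 'b::complex_inner"
  assumes "bounded_op A" shows "\<exists>C>0. \<forall>x. norm (A x) \<le> C * norm x"
proof -
  note \<open>bounded_op A\<close>
  then obtain C where C: "\<forall>x. norm (A x) \<le> C * norm x" unfolding bounded_op_def by blast
  have "\<forall>x. norm (A x) \<le> (max C 0 + 1) * norm x"
  proof
    fix x :: 'a
    have "C * norm x \<le> (max C 0 + 1) * norm x" by (intro mult_right_mono) auto
    then show "norm (A x) \<le> (max C 0 + 1) * norm x" using C by (meson order_trans)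
  qed
  then show ?thesis by (intro exI[of _ "max C 0 + 1"]) auto
qed

lemma bounded_op_comp:
  fixes A :: "'b::complex_inner \<Rightarrow> 'c::complex_inner" and B :: "'a::complex_inner \<Rightarrow> 'b"
  assumes A: "bounded_op A" and B: "bounded_op B" shows "bounded_op (A \<circ> B)"
proof -
  obtain CA where CA: "CA > 0" "\<forall>x. norm (A x) \<le> CA * norm x" using bounded_op_bound[OF A] by blast
  obtain CB where CB: "CB > 0" "\<forall>x. norm (B x) \<le> CB * norm x" using bounded_op_bound[OF B] by blast
  have "clinear_op (A \<circ> B)" using bounded_op_linear[OF A] bounded_op_linear[OF B]
    unfolding clinear_op_def by simp
  moreover have "\<forall>x. norm ((A \<circ> B) x) \<le> (CA * CB) * norm x"
  proof
    fix x
    have "norm (A (B x)) \<le> CA * norm (B x)" using CA by blast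
    also have "\<dots> \<le> CA * (CB * norm x)" using CB CA by (intro mult_left_mono) auto
    finally show "norm ((A \<circ> B) x) \<le> (CA * CB) * norm x" by (simp add: mult.assoc)
  qed
  ultimately show ?thesis unfolding bounded_op_def by blast
qed

lemma kernel_closed:
  fixes A :: "'a::complex_inner \<Rightarrow> 'b::complex_inner"
  assumes "bounded_op A"
  shows "closed_csubspace {x. A x = 0}"
proof -
  have L: "clinear_op A" using assms by (rule bounded_op_linear)
  obtain C where C: "C > 0" "\<forall>x. norm (A x) \<le> C * norm x" using bounded_op_bound[OF assms] by blast
  have "closed {x. A x = 0}"
  proof (rule closed_sequential_limits[THEN iffD2], intro allI impI, elim conjE)
    fix f l assume f: "\<forall>n. f n \<in> {x. A x = 0}" and fl: "f \<longlonglongrightarrow> l"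
    have "(\<lambda>n. C * norm (f n - l)) \<longlonglongrightarrow> C * norm (l - l)" by (intro tendsto_intros fl)
    then have lim0: "(\<lambda>n. C * norm (f n - l)) \<longlonglongrightarrow> 0" by simp
    have "\<forall>n. norm (A l) \<le> C * norm (f n - l)"
    proof
      fix n
      have "A (f n - l) = - A l" using f clinear_diff[OF L] by simp
      then have "norm (A l) = norm (A (f n - l))" by simp
      then show "norm (A l) \<le> C * norm (f n - l)" using C by simp
    qed
    then have "norm (A l) \<le> 0" using lim0 by (intro LIMSEQ_le_const[OF lim0]) auto
    then show "l \<in> {x. A x = 0}" by simp
  qed
  then show ?thesis unfolding closed_csubspace_def
    using L by (auto simp: clinear_0 clinear_add clinear_scaleC)
qed

lemma riesz:
  fixes \<phi> :: "'a::chilbert_space \<Rightarrow> complex"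
  assumes L: "\<And>x y. \<phi> (x + y) = \<phi> x + \<phi> y" "\<And>c x. \<phi> (scaleC c x) = c * \<phi> x"
    and B: "\<And>x. cmod (\<phi> x) \<le> C * norm x"
  shows "\<exists>z. \<forall>x. \<phi> x = cinner x z"
proof (cases "\<forall>x. \<phi> x = 0")
  case True then show ?thesis by (intro exI[of _ 0]) simp
next
  case False
  then obtain x0 where x0: "\<phi> x0 \<noteq> 0" by blast
  define N where "N = {x. \<phi> x = 0}"
  have \<phi>0: "\<phi> 0 = 0" using L(2)[of 0 0] by simp
  have \<phi>diff: "\<phi> (a - b) = \<phi> a - \<phi> b" for a b
  proof -
    have "\<phi> (a - b) + \<phi> b = \<phi> a" by (simp flip: L(1))
    then show ?thesis by (simp add: eq_diff_eq)
  qed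
  have N: "closed_csubspace N"
  proof -
    have "closed N"
    proof (rule closed_sequential_limits[THEN iffD2], intro allI impI, elim conjE)
      fix f l assume f: "\<forall>n. f n \<in> N" and fl: "f \<longlonglongrightarrow> l"
      have "(\<lambda>n. C * norm (f n - l)) \<longlonglongrightarrow> C * norm (l - l)" by (intro tendsto_intros fl)
      then have lim0: "(\<lambda>n. C * norm (f n - l)) \<longlonglongrightarrow> 0" by simp
      have "\<forall>n. cmod (\<phi> l) \<le> C * norm (f n - l)"
      proof
        fix n
        have "\<phi> (f n - l) = - \<phi> l" using f \<phi>diff unfolding N_def by simp
        then have "cmod (\<phi> l) = cmod (\<phi> (f n - l))" by simp
        then show "cmod (\<phi> l) \<le> C * norm (f n - l)" using B by simp
      qed
      then have "cmod (\<phi> l) \<le> 0" using lim0 by (intro LIMSEQ_le_const[OF lim0]) auto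
      then show "l \<in> N" unfolding N_def by simp
    qed
    then show ?thesis unfolding closed_csubspace_def N_def using \<phi>0 by (auto simp: L)
  qed
  define w where "w = x0 - proj N x0"
  have pN: "proj N x0 \<in> N" by (rule proj_props(1)[OF N])
  have worth: "\<And>m. m \<in> N \<Longrightarrow> cinner w m = 0" unfolding w_def by (rule proj_props(2)[OF N])
  have \<phi>w: "\<phi> w = \<phi> x0" unfolding w_def using pN by (simp add: \<phi>diff N_def)
  then have w0: "w \<noteq> 0" using x0 \<phi>0 by auto
  have ww: "cinner w w \<noteq> 0" using w0 by (simp add: cinner_self_eq0)
  define z where "z = scaleC (cnj (\<phi> w / cinner w w)) w"
  show ?thesis
  proof (intro exI allI)
    fix x
    have "\<phi> (x - scaleC (\<phi> x / \<phi> w) w) = 0"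
      using \<phi>w x0 by (simp add: \<phi>diff L(2))
    then have "x - scaleC (\<phi> x / \<phi> w) w \<in> N" unfolding N_def by simp
    then have "cinner w (x - scaleC (\<phi> x / \<phi> w) w) = 0" by (rule worth)
    then have "cinner (x - scaleC (\<phi> x / \<phi> w) w) w = 0" by (subst cinner_commute) simp
    then have "cinner x w = (\<phi> x / \<phi> w) * cinner w w"
      by (simp add: cinner_diff_left cinner_scaleC_left)
    then show "\<phi> x = cinner x z" unfolding z_def using ww x0 \<phi>w
      by (simp add: cinner_scaleC_right field_simps)
  qed
qed

lemma adj_exists:
  fixes A :: "'a::chilbert_space \<Rightarrow> 'b::complex_inner"
  assumes A: "bounded_op A"
  shows "\<exists>B. \<forall>x y. cinner (A x) y = cinner x (B y)"
proof -
  have L: "clinear_op A" using A by (rule bounded_op_linear)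
  obtain C where C: "C > 0" "\<forall>x. norm (A x) \<le> C * norm x" using bounded_op_bound[OF A] by blast
  have "\<forall>y. \<exists>z. \<forall>x. cinner (A x) y = cinner x z"
  proof
    fix y
    show "\<exists>z. \<forall>x. cinner (A x) y = cinner x z"
    proof (rule riesz)
      fix x1 x2 show "cinner (A (x1 + x2)) y = cinner (A x1) y + cinner (A x2) y"
        by (simp add: clinear_add[OF L] cinner_add_left)
    next
      fix c x show "cinner (A (scaleC c x)) y = c * cinner (A x) y"
        by (simp add: clinear_scaleC[OF L] cinner_scaleC_left)
    next
      fix x
      have "cmod (cinner (A x) y) \<le> norm (A x) * norm y" by (rule cinner_cs)
      also have "\<dots> \<le> (C * norm x) * norm y" using C by (intro mult_right_mono) auto
      finally show "cmod (cinner (A x) y) \<le> (C * norm y) * norm x" by (simp add: ac_simps)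
    qed
  qed
  then show ?thesis by metis
qed

lemma adj_prop:
  fixes A :: "'a::chilbert_space \<Rightarrow> 'b::complex_inner"
  assumes A: "bounded_op A"
  shows "cinner (A x) y = cinner x (adj A y)"
proof -
  obtain B where B: "\<forall>x y. cinner (A x) y = cinner x (B y)" using adj_exists[OF A] by blast
  have "adj A = B" unfolding adj_def
  proof (rule the_equality)
    show "\<forall>x y. cinner (A x) y = cinner x (B y)" by (rule B)
  next
    fix B' assume B': "\<forall>x y. cinner (A x) y = cinner x (B' y)"
    show "B' = B"
    proof
      fix y show "B' y = B y" by (rule cinner_ext_eq) (use B B' in metis)
    qed
  qed
  then show ?thesis using B by simp
qed

lemma adj_prop2:
  fixes A :: "'a::chilbert_space \<Rightarrow> 'b::complex_inner"
  assumes A: "bounded_op A"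
  shows "cinner (adj A y) x = cinner y (A x)"
  using adj_prop[OF A, of x y] by (metis cinner_commute)

lemma adj_bounded:
  fixes A :: "'a::chilbert_space \<Rightarrow> 'b::complex_inner"
  assumes A: "bounded_op A"
  shows "bounded_op (adj A)"
proof -
  obtain C where C: "C > 0" "\<forall>x. norm (A x) \<le> C * norm x" using bounded_op_bound[OF A] by blast
  have lin: "clinear_op (adj A)" unfolding clinear_op_def
  proof (intro conjI allI)
    fix x y show "adj A (x + y) = adj A x + adj A y"
      by (rule cinner_ext_eq) (simp add: adj_prop[OF A, symmetric] cinner_add_right)
  next
    fix c x show "adj A (scaleC c x) = scaleC c (adj A x)"
      by (rule cinner_ext_eq) (simp add: adj_prop[OF A, symmetric] cinner_scaleC_right)
  qed
  have "norm (adj A y) \<le> C * norm y" for y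
  proof (cases "adj A y = 0")
    case True then show ?thesis using C by simp
  next
    case False
    have "(norm (adj A y))\<^sup>2 = Re (cinner (adj A y) (adj A y))" by (simp add: cinner_self_Re)
    also have "cinner (adj A y) (adj A y) = cinner (A (adj A y)) y" by (simp add: adj_prop[OF A])
    also have "Re \<dots> \<le> cmod \<dots>" by (rule complex_Re_le_cmod)
    also have "\<dots> \<le> norm (A (adj A y)) * norm y" by (rule cinner_cs)
    also have "\<dots> \<le> (C * norm (adj A y)) * norm y" using C by (intro mult_right_mono) auto
    finally have "norm (adj A y) * norm (adj A y) \<le> norm (adj A y) * (C * norm y)"
      by (simp add: power2_eq_square ac_simps)
    then show ?thesis using False by simp
  qed
  with lin show ?thesis unfolding bounded_op_def by blast
qed

lemma adj_clinear:
  fixes A :: "'a::chilbert_space \<Rightarrow> 'b::complex_inner"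
  shows "bounded_op A \<Longrightarrow> clinear_op (adj A)"
  using adj_bounded bounded_op_linear by blast


definition herm :: "('a::complex_inner \<Rightarrow> 'a) \<Rightarrow> bool" where
  "herm P \<longleftrightarrow> (\<forall>x y. cinner (P x) y = cinner x (P y))"

definition bnd :: "('a::complex_inner \<Rightarrow> 'b::complex_inner) \<Rightarrow> real \<Rightarrow> bool" where
  "bnd P c \<longleftrightarrow> (\<forall>x. norm (P x) \<le> c * norm x)"

definition posf :: "('a::complex_inner \<Rightarrow> 'a) \<Rightarrow> bool" where
  "posf P \<longleftrightarrow> (\<forall>x. Im (cinner (P x) x) = 0 \<and> Re (cinner (P x) x) \<ge> 0)"

lemma polarization_herm:
  fixes P :: "'a::complex_inner \<Rightarrow> 'a"
  assumes L: "clinear_op P" and R: "\<And>x. Im (cinner (P x) x) = 0"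
  shows "herm P"
  unfolding herm_def
proof (intro allI)
  fix x y
  have e1: "cinner (P (x + y)) (x + y) = cinner (P x) x + cinner (P y) y + cinner (P x) y + cinner (P y) x"
    by (simp add: clinear_add[OF L] cinner_add_left cinner_add_right)
  have "Im (cinner (P x) y + cinner (P y) x) = 0"
    using R[of "x+y"] R[of x] R[of y] e1 by simp
  then have i1: "Im (cinner (P x) y) = - Im (cinner (P y) x)" by simp
  have e2: "cinner (P (x + scaleC \<i> y)) (x + scaleC \<i> y) = cinner (P x) x + cinner (P y) y
      - \<i> * cinner (P x) y + \<i> * cinner (P y) x"
    by (simp add: clinear_add[OF L] clinear_scaleC[OF L] cinner_add_left cinner_add_right
        cinner_scaleC_left cinner_scaleC_right algebra_simps)
  have "Im (- \<i> * cinner (P x) y + \<i> * cinner (P y) x) = 0"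
    using R[of "x + scaleC \<i> y"] R[of x] R[of y] e2 by simp
  then have i2: "Re (cinner (P x) y) = Re (cinner (P y) x)" by simp
  have "cinner (P x) y = cnj (cinner (P y) x)" using i1 i2 by (simp add: complex_eq_iff)
  also have "\<dots> = cinner x (P y)" by (simp add: cinner_commute[of x])
  finally show "cinner (P x) y = cinner x (P y)" .
qed

lemma herm_Im:
  fixes P :: "'a::complex_inner \<Rightarrow> 'a"
  assumes "herm P" shows "Im (cinner (P x) x) = 0"
proof -
  have "cinner (P x) x = cnj (cinner (P x) x)"
    using assms unfolding herm_def by (metis cinner_commute)
  then show ?thesis by (metis Im_complex_of_real Reals_cnj_iff complex_is_Real_iff)
qed

lemma gen_cs:
  fixes P :: "'a::complex_inner \<Rightarrow> 'a"
  assumes L: "clinear_op P" and H: "herm P" and Pp: "posf P" and B: "bnd P c" and c: "c > 0"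
  shows "(norm (P x))\<^sup>2 \<le> c * Re (cinner (P x) x)"
proof -
  define y where "y = P x"
  define t where "t = 1 / c"
  define a where "a = Re (cinner (P x) x)"
  define b where "b = (norm y)\<^sup>2"
  have "0 \<le> Re (cinner (P (x - scaleR t y)) (x - scaleR t y))" using Pp unfolding posf_def by blast
  also have "cinner (P (x - scaleR t y)) (x - scaleR t y)
      = cinner (P x) x - of_real t * cinner (P x) y - of_real t * cinner (P y) x + of_real t * of_real t * cinner (P y) y"
    by (simp add: clinear_diff[OF L] clinear_scaleR[OF L] cinner_diff_left cinner_diff_right
        cinner_scaleR_left cinner_scaleR_right algebra_simps)
  also have "cinner (P y) x = cinner y (P x)" using H unfolding herm_def by blast
  also have "cinner y (P x) = of_real b" unfolding y_def b_def by (simp add: cinner_self_norm)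
  also have "cinner (P x) y = of_real b" unfolding y_def b_def by (simp add: cinner_self_norm)
  finally have "0 \<le> a - 2 * t * b + t * t * Re (cinner (P y) y)" unfolding a_def by (simp add: ac_simps)
  moreover have "Re (cinner (P y) y) \<le> c * b"
  proof -
    have "Re (cinner (P y) y) \<le> cmod (cinner (P y) y)" by (rule complex_Re_le_cmod)
    also have "\<dots> \<le> norm (P y) * norm y" by (rule cinner_cs)
    also have "\<dots> \<le> (c * norm y) * norm y" using B unfolding bnd_def by (intro mult_right_mono) auto
    finally show ?thesis unfolding b_def by (simp add: power2_eq_square mult.assoc)
  qed
  moreover have "t * t \<ge> 0" by simp
  ultimately have "0 \<le> a - 2 * t * b + t * t * (c * b)"
    by (smt (verit) mult_left_mono)
  then have "0 \<le> a - b / c" unfolding t_def using c by (simp add: field_simps power2_eq_square)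
  then have "b \<le> c * a" using c by (simp add: field_simps)
  then show ?thesis unfolding a_def b_def y_def .
qed

lemma pos_zero:
  fixes P :: "'a::complex_inner \<Rightarrow> 'a"
  assumes L: "clinear_op P" and H: "herm P" and Pp: "posf P" and B: "bnd P c" and c: "c > 0"
    and z: "Re (cinner (P x) x) = 0"
  shows "P x = 0"
  using gen_cs[OF assms(1-5), of x] z by simp

lemma bounded_op_bnd: "bounded_op A \<Longrightarrow> \<exists>c>0. bnd A c"
  unfolding bnd_def using bounded_op_bound by blast

lemma positive_op_posf: "positive_op A \<Longrightarrow> posf A"
  unfolding positive_op_def posf_def by blast

lemma positive_op_herm: "positive_op A \<Longrightarrow> herm A"
  unfolding positive_op_def by (intro polarization_herm) (auto simp: bounded_op_def)


definition evl :: "('a::complex_inner \<Rightarrow> 'a) \<Rightarrow> (real \<times> nat) list \<Rightarrow> 'a \<Rightarrow> 'a" where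
  "evl C L x = sum_list (map (\<lambda>(r,k). scaleR r ((C ^^ k) x)) L)"

definition prodL :: "(real \<times> nat) list \<Rightarrow> (real \<times> nat) list \<Rightarrow> (real \<times> nat) list" where
  "prodL L M = concat (map (\<lambda>(r,k). map (\<lambda>(s,m). (r * s, k+m)) M) L)"

definition nonneg :: "(real \<times> nat) list \<Rightarrow> bool" where
  "nonneg L \<longleftrightarrow> (\<forall>p\<in>set L. fst p \<ge> 0)"

lemma evl_Nil[simp]: "evl C [] x = 0" by (simp add: evl_def)
lemma evl_Cons[simp]: "evl C ((r,k) # L) x = scaleR r ((C ^^ k) x) + evl C L x" by (simp add: evl_def)
lemma evl_append: "evl C (L @ M) x = evl C L x + evl C M x" by (simp add: evl_def)
lemma evl_scale: "evl C (map (\<lambda>(r,k). (s * r,k)) L) x = scaleR s (evl C L x)"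
  by (induction L) (auto simp: scaleR_add_right)

lemma clinear_funpow: "clinear_op (C::'a::complex_inner \<Rightarrow> 'a) \<Longrightarrow> clinear_op (C ^^ k)"
proof (induction k)
  case 0 then show ?case by (simp add: clinear_op_def)
next
  case (Suc k)
  have "(C ^^ Suc k) = C \<circ> (C ^^ k)" by simp
  then show ?case using Suc unfolding clinear_op_def by (simp del: funpow.simps)
qed

lemma clinear_sum_list: "clinear_op W \<Longrightarrow> W (sum_list (map f L)) = sum_list (map (W \<circ> f) L)"
  by (induction L) (auto simp: clinear_add clinear_0)

lemma funpow_lin_shift:
  assumes "clinear_op C"
  shows "(C ^^ k) (evl C M x) = evl C (map (\<lambda>(s,m). (s, k+m)) M) x"
proof (induction M)
  case Nil then show ?case using clinear_0[OF clinear_funpow[OF assms]] by simp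
next
  case (Cons p M)
  obtain s m where p: "p = (s,m)" by force
  have "(C ^^ k) (scaleR s ((C ^^ m) x) + evl C M x) = scaleR s ((C ^^ k) ((C ^^ m) x)) + (C ^^ k) (evl C M x)"
    using clinear_funpow[OF assms] by (simp add: clinear_add clinear_scaleR)
  also have "(C ^^ k) ((C ^^ m) x) = (C ^^ (k+m)) x" by (simp add: funpow_add)
  finally show ?case using Cons p by simp
qed

lemma evl_prod:
  assumes "clinear_op C"
  shows "evl C (prodL L M) x = evl C L (evl C M x)"
proof (induction L)
  case Nil then show ?case by (simp add: prodL_def)
next
  case (Cons p L)
  obtain r k where p: "p = (r,k)" by force
  have "evl C (map (\<lambda>(s,m). (r * s, k+m)) M) x = evl C (map (\<lambda>(s,m). (r * s,m)) (map (\<lambda>(s,m). (s, k+m)) M)) x"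
    by (simp add: comp_def split_def)
  also have "\<dots> = scaleR r (evl C (map (\<lambda>(s,m). (s, k+m)) M) x)" by (rule evl_scale)
  also have "\<dots> = scaleR r ((C ^^ k) (evl C M x))" by (simp add: funpow_lin_shift[OF assms])
  finally have h: "evl C (map (\<lambda>(s,m). (r * s, k+m)) M) x = scaleR r ((C ^^ k) (evl C M x))" .
  have "evl C (prodL (p # L) M) x = evl C (map (\<lambda>(s,m). (r * s, k+m)) M) x + evl C (prodL L M) x"
    by (simp add: prodL_def p evl_append)
  then show ?case using h Cons p by simp
qed

lemma nonneg_append: "nonneg L \<Longrightarrow> nonneg M \<Longrightarrow> nonneg (L @ M)" by (auto simp: nonneg_def)
lemma nonneg_scale: "s \<ge> 0 \<Longrightarrow> nonneg L \<Longrightarrow> nonneg (map (\<lambda>(r,k). (s * r,k)) L)"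
  by (auto simp: nonneg_def)
lemma nonneg_prod: "nonneg L \<Longrightarrow> nonneg M \<Longrightarrow> nonneg (prodL L M)"
  unfolding nonneg_def prodL_def by (fastforce intro: mult_nonneg_nonneg)

lemma clinear_evl: "clinear_op C \<Longrightarrow> clinear_op (evl C L)"
proof (induction L)
  case Nil then show ?case by (simp add: clinear_op_def)
next
  case (Cons p L)
  obtain r k where p: "p = (r,k)" by force
  have l: "clinear_op (C ^^ k)" by (rule clinear_funpow[OF Cons.prems])
  show ?case using Cons.IH[OF Cons.prems] l unfolding clinear_op_def p
    by (auto simp: scaleR_add_right scaleR_scaleC scaleC_scaleC scaleC_add_right mult.commute)
qed

lemma comm_funpow:
  fixes C W :: "'a::complex_inner \<Rightarrow> 'a"
  assumes "clinear_op W" "\<And>x. W (C x) = C (W x)"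
  shows "W ((C ^^ k) x) = (C ^^ k) (W x)"
  by (induction k) (auto simp: assms)

lemma comm_evl:
  assumes W: "clinear_op W" and c: "\<And>x. W (C x) = C (W x)"
  shows "W (evl C L x) = evl C L (W x)"
proof (induction L)
  case Nil then show ?case by (simp add: clinear_0[OF W])
next
  case (Cons p L)
  obtain r k where p: "p = (r,k)" by force
  show ?case using Cons p by (simp add: clinear_add[OF W] clinear_scaleR[OF W] comm_funpow[where W=W and C=C, OF W c])
qed

lemma herm_funpow:
  assumes "herm C" shows "herm (C ^^ k)"
proof (induction k)
  case 0 then show ?case by (simp add: herm_def)
next
  case (Suc k)
  show ?case unfolding herm_def
  proof (intro allI)
    fix x y
    have "cinner ((C ^^ Suc k) x) y = cinner (C ((C ^^ k) x)) y" by simp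
    also have "\<dots> = cinner ((C ^^ k) x) (C y)" using assms unfolding herm_def by blast
    also have "\<dots> = cinner x ((C ^^ k) (C y))" using Suc unfolding herm_def by blast
    also have "(C ^^ k) (C y) = (C ^^ Suc k) y" by (simp add: funpow_swap1)
    finally show "cinner ((C ^^ Suc k) x) y = cinner x ((C ^^ Suc k) y)" .
  qed
qed

lemma pos_funpow:
  assumes H: "herm C" and P: "posf C"
  shows "Re (cinner ((C ^^ k) x) x) \<ge> 0"
proof (cases "even k")
  case True
  then obtain j where k: "k = j + j" by (metis evenE mult_2)
  have "(C ^^ k) x = (C ^^ j) ((C ^^ j) x)" by (simp add: k funpow_add)
  then have "cinner ((C ^^ k) x) x = cinner ((C ^^ j) x) ((C ^^ j) x)"
    using herm_funpow[OF H, of j] unfolding herm_def by simp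
  then show ?thesis by (simp add: cinner_self_Re)
next
  case False
  then obtain j where k: "k = j + (1 + j)" by (metis oddE add.commute add.left_commute mult_2)
  have "(C ^^ k) x = (C ^^ j) (C ((C ^^ j) x))" by (simp add: k funpow_add funpow_swap1)
  then have "cinner ((C ^^ k) x) x = cinner (C ((C ^^ j) x)) ((C ^^ j) x)"
    using herm_funpow[OF H, of j] unfolding herm_def by simp
  then show ?thesis using P unfolding posf_def by simp
qed

lemma posf_evl:
  assumes H: "herm C" and P: "posf C" and N: "nonneg L"
  shows "Im (cinner (evl C L x) x) = 0 \<and> Re (cinner (evl C L x) x) \<ge> 0"
  using N
proof (induction L)
  case Nil then show ?case by simp
next
  case (Cons p L)
  obtain r k where p: "p = (r,k)" by force
  have r: "r \<ge> 0" using Cons.prems p by (simp add: nonneg_def)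
  have IH: "Im (cinner (evl C L x) x) = 0 \<and> Re (cinner (evl C L x) x) \<ge> 0"
    using Cons.IH Cons.prems by (simp add: nonneg_def)
  have i: "Im (cinner ((C ^^ k) x) x) = 0" by (rule herm_Im[OF herm_funpow[OF H]])
  have "Re (cinner ((C ^^ k) x) x) \<ge> 0" by (rule pos_funpow[OF H P])
  with i r IH show ?case by (simp add: p cinner_add_left cinner_scaleR_left)
qed

lemma evl_posf: "herm C \<Longrightarrow> posf C \<Longrightarrow> nonneg L \<Longrightarrow> posf (evl C L)"
  using posf_evl unfolding posf_def[of "evl C L"] by blast

lemma evl_herm: "clinear_op C \<Longrightarrow> herm C \<Longrightarrow> posf C \<Longrightarrow> nonneg L \<Longrightarrow> herm (evl C L)"
  by (intro polarization_herm clinear_evl) (use posf_evl in blast)+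


lemma tendsto_clin:
  fixes W :: "'a::complex_inner \<Rightarrow> 'b::complex_inner"
  assumes W: "clinear_op W" and B: "bnd W c" and f: "f \<longlonglongrightarrow> l"
  shows "(\<lambda>n. W (f n)) \<longlonglongrightarrow> W l"
proof -
  have "(\<lambda>n. f n - l) \<longlonglongrightarrow> 0" using f by (rule LIM_zero)
  then have "(\<lambda>n. norm (f n - l)) \<longlonglongrightarrow> 0" by (rule tendsto_norm_zero)
  then have g: "(\<lambda>n. c * norm (f n - l)) \<longlonglongrightarrow> 0" by (rule tendsto_mult_right_zero)
  have "\<forall>n. norm (W (f n) - W l) \<le> c * norm (f n - l)"
    using B unfolding bnd_def by (simp add: clinear_diff[OF W, symmetric])
  then have "(\<lambda>n. W (f n) - W l) \<longlonglongrightarrow> 0" by (intro Lim_null_comparison[OF _ g]) auto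
  then show ?thesis by (rule LIM_zero_cancel)
qed

lemma tendsto_cinner_left:
  fixes f :: "nat \<Rightarrow> 'a::complex_inner"
  assumes f: "f \<longlonglongrightarrow> l"
  shows "(\<lambda>n. cinner (f n) y) \<longlonglongrightarrow> cinner l y"
proof -
  have "(\<lambda>n. f n - l) \<longlonglongrightarrow> 0" using f by (rule LIM_zero)
  then have "(\<lambda>n. norm (f n - l)) \<longlonglongrightarrow> 0" by (rule tendsto_norm_zero)
  then have g: "(\<lambda>n. norm (f n - l) * norm y) \<longlonglongrightarrow> 0" by (rule tendsto_mult_left_zero)
  have "\<forall>n. norm (cinner (f n) y - cinner l y) \<le> norm (f n - l) * norm y"
    by (simp add: cinner_diff_left[symmetric] cinner_cs)
  then have "(\<lambda>n. cinner (f n) y - cinner l y) \<longlonglongrightarrow> 0" by (intro Lim_null_comparison[OF _ g]) auto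
  then show ?thesis by (rule LIM_zero_cancel)
qed

lemma tendsto_cinner_right:
  fixes f :: "nat \<Rightarrow> 'a::complex_inner"
  assumes f: "f \<longlonglongrightarrow> l"
  shows "(\<lambda>n. cinner y (f n)) \<longlonglongrightarrow> cinner y l"
proof -
  have "(\<lambda>n. cnj (cinner (f n) y)) \<longlonglongrightarrow> cnj (cinner l y)"
    by (intro tendsto_cnj tendsto_cinner_left f)
  then show ?thesis by (simp add: cinner_commute[of y])
qed

locale sqc =
  fixes C :: "'a::chilbert_space \<Rightarrow> 'a"
  assumes lin: "clinear_op C" and hm: "herm C" and ps: "posf C" and bd: "bnd C 1"
begin

fun YL :: "nat \<Rightarrow> (real \<times> nat) list" where
  "YL 0 = []"
| "YL (Suc n) = (1/2, 1) # map (\<lambda>(r,k). (1/2 * r, k)) (prodL (YL n) (YL n))"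

definition Y :: "nat \<Rightarrow> 'a \<Rightarrow> 'a" where "Y n = evl C (YL n)"

lemma YL_nonneg: "nonneg (YL n)"
proof (induction n)
  case 0 then show ?case by (simp add: nonneg_def)
next
  case (Suc n)
  have "nonneg (map (\<lambda>(r,k). (1/2 * r, k)) (prodL (YL n) (YL n)))"
    by (intro nonneg_scale nonneg_prod Suc) simp
  then show ?case by (simp add: nonneg_def)
qed

lemma Y_0: "Y 0 x = 0" by (simp add: Y_def)

lemma Y_Suc: "Y (Suc n) x = scaleR (1/2) (C x) + scaleR (1/2) (Y n (Y n x))"
proof -
  have "Y (Suc n) x = scaleR (1/2) ((C ^^ 1) x) + evl C (map (\<lambda>(r,k). (1/2 * r, k)) (prodL (YL n) (YL n))) x"
    by (simp add: Y_def)
  also have "evl C (map (\<lambda>(r,k). (1/2 * r, k)) (prodL (YL n) (YL n))) x = scaleR (1/2) (Y n (Y n x))"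
    unfolding evl_scale evl_prod[OF lin] Y_def ..
  finally show ?thesis by simp
qed

lemma Y_lin: "clinear_op (Y n)" unfolding Y_def by (rule clinear_evl[OF lin])
lemma Y_herm: "herm (Y n)" unfolding Y_def by (rule evl_herm[OF lin hm ps YL_nonneg])

lemma evl_comm_C: "C (evl C L x) = evl C L (C x)"
  by (rule comm_evl[OF lin]) simp

lemma Y_comm: "Y n (Y m x) = Y m (Y n x)"
  unfolding Y_def by (rule comm_evl[OF clinear_evl[OF lin]]) (rule evl_comm_C[symmetric])

lemma Y_bnd: "bnd (Y n) 1"
proof (induction n)
  case 0 then show ?case by (simp add: bnd_def Y_0)
next
  case (Suc n)
  show ?case unfolding bnd_def
  proof
    fix x
    have "norm (Y (Suc n) x) \<le> norm (scaleR (1/2) (C x)) + norm (scaleR (1/2) (Y n (Y n x)))"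
      unfolding Y_Suc by (rule norm_triangle_ineq)
    also have "\<dots> = (1/2) * norm (C x) + (1/2) * norm (Y n (Y n x))" by simp
    also have "\<dots> \<le> (1/2) * norm x + (1/2) * norm x"
    proof -
      have "norm (C x) \<le> norm x" using bd unfolding bnd_def by (metis mult_1)
      moreover have "norm (Y n (Y n x)) \<le> norm x"
        using Suc unfolding bnd_def by (metis mult_1 order_trans)
      ultimately show ?thesis by simp
    qed
    finally show "norm (Y (Suc n) x) \<le> 1 * norm x" by simp
  qed
qed

fun DL :: "nat \<Rightarrow> (real \<times> nat) list" where
  "DL 0 = YL 1"
| "DL (Suc n) = map (\<lambda>(r,k). (1/2 * r, k)) (prodL (DL n) (YL (Suc n) @ YL n))"

lemma DL_nonneg: "nonneg (DL n)"
proof (induction n)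
  case 0 then show ?case using YL_nonneg[of 1] by simp
next
  case (Suc n)
  then show ?case
    by (simp only: DL.simps) (intro nonneg_scale nonneg_prod nonneg_append YL_nonneg, auto)
qed

lemma DL_eq: "evl C (DL n) x = Y (Suc n) x - Y n x"
proof (induction n arbitrary: x)
  case 0 then show ?case by (simp add: Y_def)
next
  case (Suc n)
  have "evl C (DL (Suc n)) x = scaleR (1/2) (evl C (DL n) (Y (Suc n) x + Y n x))"
    unfolding DL.simps evl_scale evl_prod[OF lin] evl_append Y_def ..
  also have "evl C (DL n) (Y (Suc n) x + Y n x) = Y (Suc n) (Y (Suc n) x + Y n x) - Y n (Y (Suc n) x + Y n x)"
    by (rule Suc)
  also have "\<dots> = Y (Suc n) (Y (Suc n) x) - Y n (Y n x)"
    using Y_comm[of "Suc n" n x] by (simp add: clinear_add[OF Y_lin])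
  finally show ?case by (simp add: Y_Suc[of "Suc n"] Y_Suc[of n] scaleR_diff_right[symmetric] algebra_simps)
qed

lemma Y_mono_step: "Re (cinner (Y n x) x) \<le> Re (cinner (Y (Suc n) x) x)"
proof -
  have "Re (cinner (evl C (DL n) x) x) \<ge> 0" using posf_evl[OF hm ps DL_nonneg] by blast
  then show ?thesis by (simp add: DL_eq cinner_diff_left)
qed

lemma Y_mono: "m \<le> n \<Longrightarrow> Re (cinner (Y m x) x) \<le> Re (cinner (Y n x) x)"
  by (induction n rule: dec_induct) (auto intro: order_trans[OF _ Y_mono_step])

lemma q_bound: "Re (cinner (Y n x) x) \<le> (norm x)\<^sup>2"
proof -
  have "Re (cinner (Y n x) x) \<le> cmod (cinner (Y n x) x)" by (rule complex_Re_le_cmod)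
  also have "\<dots> \<le> norm (Y n x) * norm x" by (rule cinner_cs)
  also have "\<dots> \<le> norm x * norm x" using Y_bnd[of n] unfolding bnd_def
    by (intro mult_right_mono) (auto simp: mult_1[of "norm x"] order_trans)
  finally show ?thesis by (simp add: power2_eq_square)
qed

lemma diff_bound:
  assumes "n \<le> m"
  shows "(norm (Y m x - Y n x))\<^sup>2 \<le> 2 * (Re (cinner (Y m x) x) - Re (cinner (Y n x) x))"
proof -
  define P where "P = (\<lambda>z. Y m z - Y n z)"
  have L: "clinear_op P" unfolding P_def clinear_op_def
    using Y_lin[of m] Y_lin[of n] by (simp add: clinear_add clinear_scaleC scaleC_diff_right)
  have H: "herm P" unfolding P_def herm_def
    using Y_herm[of m] Y_herm[of n] by (simp add: herm_def cinner_diff_left cinner_diff_right)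
  have Pp: "posf P" unfolding posf_def
  proof
    fix z
    have "Im (cinner (P z) z) = Im (cinner (Y m z) z) - Im (cinner (Y n z) z)"
      by (simp add: P_def cinner_diff_left)
    also have "\<dots> = 0" using herm_Im[OF Y_herm[of m]] herm_Im[OF Y_herm[of n]] by simp
    finally show "Im (cinner (P z) z) = 0 \<and> Re (cinner (P z) z) \<ge> 0"
      using Y_mono[OF assms, of z] by (simp add: P_def cinner_diff_left)
  qed
  have B: "bnd P 2" unfolding bnd_def
  proof
    fix z
    have "norm (P z) \<le> norm (Y m z) + norm (Y n z)" unfolding P_def by (rule norm_triangle_ineq4)
    also have "\<dots> \<le> norm z + norm z" using Y_bnd[of m] Y_bnd[of n] unfolding bnd_def
      by (intro add_mono) (metis mult_1)+
    finally show "norm (P z) \<le> 2 * norm z" by simp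
  qed
  have "(norm (P x))\<^sup>2 \<le> 2 * Re (cinner (P x) x)" by (rule gen_cs[OF L H Pp B]) simp
  then show ?thesis by (simp add: P_def cinner_diff_left)
qed

lemma Y_conv: "convergent (\<lambda>n. Y n x)"
proof -
  define q where "q n = Re (cinner (Y n x) x)" for n
  have "incseq q" unfolding q_def incseq_def using Y_mono by blast
  moreover have "\<forall>n. q n \<le> (norm x)\<^sup>2" unfolding q_def using q_bound by blast
  moreover have "\<forall>n. 0 \<le> q n" unfolding q_def using Y_mono[of 0] by (simp add: Y_0)
  ultimately have "convergent q"
  proof (intro Bseq_mono_convergent)
    assume a: "\<forall>n. q n \<le> (norm x)\<^sup>2" "\<forall>n. 0 \<le> q n"
    have "\<forall>n. norm (q n) \<le> (norm x)\<^sup>2 + 1" using a by (simp add: abs_if) (smt (verit))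
    moreover have "(norm x)\<^sup>2 + 1 > 0" by (simp add: add_nonneg_pos)
    ultimately show "Bseq q" unfolding Bseq_def by blast
  qed (auto simp: incseq_def)
  then have cq: "Cauchy q" by (rule convergent_Cauchy)
  have "Cauchy (\<lambda>n. Y n x)"
  proof (rule metric_CauchyI)
    fix e :: real assume e: "e > 0"
    then have "e\<^sup>2 / 2 > 0" by simp
    then obtain N where N: "\<And>m n. m \<ge> N \<Longrightarrow> n \<ge> N \<Longrightarrow> dist (q m) (q n) < e\<^sup>2 / 2"
      using cq unfolding Cauchy_def by blast
    have "dist (Y m x) (Y n x) < e" if m: "m \<ge> N" and n: "n \<ge> N" for m n
    proof -
      have "(norm (Y m x - Y n x))\<^sup>2 < e\<^sup>2"
      proof (cases "n \<le> m")
        case True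
        have "(norm (Y m x - Y n x))\<^sup>2 \<le> 2 * (q m - q n)" using diff_bound[OF True] unfolding q_def .
        also have "\<dots> < e\<^sup>2" using N[OF m n] abs_ge_self[of "q m - q n"] by (simp add: dist_real_def)
        finally show ?thesis .
      next
        case False
        then have "m \<le> n" by simp
        have "(norm (Y m x - Y n x))\<^sup>2 = (norm (Y n x - Y m x))\<^sup>2" by (simp add: norm_minus_commute)
        also have "\<dots> \<le> 2 * (q n - q m)" using diff_bound[OF \<open>m \<le> n\<close>] unfolding q_def .
        also have "\<dots> < e\<^sup>2" using N[OF n m] abs_ge_self[of "q n - q m"] by (simp add: dist_real_def)
        finally show ?thesis .
      qed
      then have "norm (Y m x - Y n x) < e" using e by (simp add: power_less_imp_less_base)
      then show ?thesis by (simp add: dist_norm)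
    qed
    then show "\<exists>N. \<forall>m\<ge>N. \<forall>n\<ge>N. dist (Y m x) (Y n x) < e" by blast
  qed
  then show ?thesis using convergent_eq_Cauchy convergent_def by blast
qed

definition Yl :: "'a \<Rightarrow> 'a" where "Yl x = lim (\<lambda>n. Y n x)"

lemma Yl_lim: "(\<lambda>n. Y n x) \<longlonglongrightarrow> Yl x"
  unfolding Yl_def using Y_conv convergent_LIMSEQ_iff by blast

lemma Yl_lin: "clinear_op Yl"
  unfolding clinear_op_def
proof (intro conjI allI)
  fix x y
  have "(\<lambda>n. Y n (x + y)) \<longlonglongrightarrow> Yl x + Yl y"
    using tendsto_add[OF Yl_lim[of x] Yl_lim[of y]] by (simp add: clinear_add[OF Y_lin])
  then show "Yl (x + y) = Yl x + Yl y" using Yl_lim LIMSEQ_unique by blast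
next
  fix c x
  have sc: "clinear_op (scaleC c :: 'a \<Rightarrow> 'a)" unfolding clinear_op_def
    by (simp add: scaleC_add_right scaleC_scaleC mult.commute)
  have "bnd (scaleC c :: 'a \<Rightarrow> 'a) (cmod c)" unfolding bnd_def by (simp add: norm_scaleC)
  from tendsto_clin[OF sc this Yl_lim[of x]]
  have "(\<lambda>n. Y n (scaleC c x)) \<longlonglongrightarrow> scaleC c (Yl x)" by (simp add: clinear_scaleC[OF Y_lin])
  then show "Yl (scaleC c x) = scaleC c (Yl x)" using Yl_lim LIMSEQ_unique by blast
qed

lemma Yl_bnd: "bnd Yl 1"
  unfolding bnd_def
proof
  fix x
  have "(\<lambda>n. norm (Y n x)) \<longlonglongrightarrow> norm (Yl x)" by (intro tendsto_norm Yl_lim)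
  moreover have "\<forall>n. norm (Y n x) \<le> norm x" using Y_bnd unfolding bnd_def by (metis mult_1)
  ultimately have "norm (Yl x) \<le> norm x" by (intro LIMSEQ_le_const2) auto
  then show "norm (Yl x) \<le> 1 * norm x" by simp
qed

lemma Yl_herm: "herm Yl"
  unfolding herm_def
proof (intro allI)
  fix x y
  have "(\<lambda>n. cinner (Y n x) y) \<longlonglongrightarrow> cinner (Yl x) y" by (intro tendsto_cinner_left Yl_lim)
  moreover have "(\<lambda>n. cinner x (Y n y)) \<longlonglongrightarrow> cinner x (Yl y)" by (intro tendsto_cinner_right Yl_lim)
  moreover have "\<forall>n. cinner (Y n x) y = cinner x (Y n y)" using Y_herm unfolding herm_def by blast
  ultimately show "cinner (Yl x) y = cinner x (Yl y)" using LIMSEQ_unique by force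
qed

lemma Yl_fix: "Yl x = scaleR (1/2) (C x) + scaleR (1/2) (Yl (Yl x))"
proof -
  have a: "(\<lambda>n. Y n (Y n x) - Y n (Yl x)) \<longlonglongrightarrow> 0"
  proof -
    have "(\<lambda>n. Y n x - Yl x) \<longlonglongrightarrow> 0" using Yl_lim by (rule LIM_zero)
    then have g: "(\<lambda>n. norm (Y n x - Yl x)) \<longlonglongrightarrow> 0" by (rule tendsto_norm_zero)
    have "\<forall>n. norm (Y n (Y n x) - Y n (Yl x)) \<le> norm (Y n x - Yl x)"
      using Y_bnd unfolding bnd_def by (metis clinear_diff[OF Y_lin] mult_1)
    then show ?thesis by (intro Lim_null_comparison[OF _ g]) auto
  qed
  have "(\<lambda>n. (Y n (Y n x) - Y n (Yl x)) + Y n (Yl x)) \<longlonglongrightarrow> 0 + Yl (Yl x)"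
    by (intro tendsto_add a Yl_lim)
  then have "(\<lambda>n. Y n (Y n x)) \<longlonglongrightarrow> Yl (Yl x)" by simp
  then have "(\<lambda>n. scaleR (1/2) (C x) + scaleR (1/2) (Y n (Y n x))) \<longlonglongrightarrow> scaleR (1/2) (C x) + scaleR (1/2) (Yl (Yl x))"
    by (intro tendsto_intros)
  then have "(\<lambda>n. Y (Suc n) x) \<longlonglongrightarrow> scaleR (1/2) (C x) + scaleR (1/2) (Yl (Yl x))"
    by (simp add: Y_Suc)
  moreover have "(\<lambda>n. Y (Suc n) x) \<longlonglongrightarrow> Yl x" by (rule LIMSEQ_Suc[OF Yl_lim])
  ultimately show ?thesis using LIMSEQ_unique by blast
qed

lemma Yl_comm:
  assumes W: "clinear_op W" "bnd W c" and WC: "\<And>x. W (C x) = C (W x)"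
  shows "W (Yl x) = Yl (W x)"
proof -
  have "(\<lambda>n. W (Y n x)) \<longlonglongrightarrow> W (Yl x)" by (rule tendsto_clin[OF W Yl_lim])
  moreover have "W (Y n x) = Y n (W x)" for n unfolding Y_def by (rule comm_evl[where W=W and C=C, OF W(1) WC])
  ultimately have "(\<lambda>n. Y n (W x)) \<longlonglongrightarrow> W (Yl x)" by simp
  then show ?thesis using Yl_lim LIMSEQ_unique by blast
qed

end


lemma sqrt_unique:
  fixes A Q Q' :: "'a::chilbert_space \<Rightarrow> 'a"
  assumes Q: "positive_op Q" and QQ: "\<And>x. Q (Q x) = A x"
    and Q': "positive_op Q'" and QQ': "\<And>x. Q' (Q' x) = A x"
    and comm: "\<And>x. Q' (Q x) = Q (Q' x)"
  shows "Q = Q'"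
proof
  fix x
  have LQ: "clinear_op Q" and LQ': "clinear_op Q'"
    using Q Q' unfolding positive_op_def bounded_op_def by auto
  obtain c where c: "c > 0" "bnd Q c" using bounded_op_bnd Q unfolding positive_op_def by blast
  obtain c' where c': "c' > 0" "bnd Q' c'" using bounded_op_bnd Q' unfolding positive_op_def by blast
  have HQ: "herm Q" and HQ': "herm Q'" using positive_op_herm Q Q' by auto
  have PQ: "posf Q" and PQ': "posf Q'" using positive_op_posf Q Q' by auto
  define y where "y = Q x - Q' x"
  have "Q y + Q' y = 0"
    unfolding y_def using comm[of x] QQ[of x] QQ'[of x] by (simp add: clinear_diff[OF LQ] clinear_diff[OF LQ'])
  then have "Re (cinner (Q y) y) + Re (cinner (Q' y) y) = 0"
    by (metis cinner_add_left cinner_zero_left plus_complex.sel(1) zero_complex.sel(1))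
  moreover have "Re (cinner (Q y) y) \<ge> 0" "Re (cinner (Q' y) y) \<ge> 0" using PQ PQ' unfolding posf_def by auto
  ultimately have "Re (cinner (Q y) y) = 0" "Re (cinner (Q' y) y) = 0" by linarith+
  then have "Q y = 0" "Q' y = 0" using pos_zero[OF LQ HQ PQ c(2) c(1)] pos_zero[OF LQ' HQ' PQ' c'(2) c'(1)] by auto
  then have "Q y - Q' y = 0" by simp
  moreover have "cinner (Q x - Q' x) (Q x - Q' x) = cinner (Q y - Q' y) x"
    unfolding y_def using HQ HQ' unfolding herm_def by (simp add: cinner_diff_left cinner_diff_right)
  ultimately have "cinner (Q x - Q' x) (Q x - Q' x) = 0" by simp
  then show "Q x = Q' x" by (simp add: cinner_self_eq0)
qed

lemma sqrt_exists:
  fixes A :: "'a::chilbert_space \<Rightarrow> 'a"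
  assumes A: "positive_op A"
  shows "\<exists>Q. positive_op Q \<and> (\<forall>x. Q (Q x) = A x) \<and>
     (\<forall>Q'. positive_op Q' \<longrightarrow> (\<forall>x. Q' (Q' x) = A x) \<longrightarrow> (\<forall>x. Q' (Q x) = Q (Q' x)))"
proof -
  have LA: "clinear_op A" using A unfolding positive_op_def bounded_op_def by auto
  obtain c where c: "c > 0" "bnd A c" using bounded_op_bnd A unfolding positive_op_def by blast
  have HA: "herm A" using positive_op_herm A by auto
  have PA: "posf A" using positive_op_posf A by auto
  define B where "B = (\<lambda>x. scaleR (1/c) (A x))"
  define C where "C = (\<lambda>x. x - B x)"
  have LB: "clinear_op B" using LA unfolding B_def clinear_op_def
    by (simp add: scaleC_add_right scaleR_scaleC scaleC_scaleC mult.commute)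
  have LC: "clinear_op C" using LB unfolding C_def clinear_op_def by (simp add: scaleC_diff_right)
  have ReA: "Re (cinner (A x) x) \<le> c * (norm x)\<^sup>2" for x
  proof -
    have "Re (cinner (A x) x) \<le> cmod (cinner (A x) x)" by (rule complex_Re_le_cmod)
    also have "\<dots> \<le> norm (A x) * norm x" by (rule cinner_cs)
    also have "\<dots> \<le> (c * norm x) * norm x" using c unfolding bnd_def by (intro mult_right_mono) auto
    finally show ?thesis by (simp add: power2_eq_square mult.assoc)
  qed
  have ReB: "Re (cinner (B x) x) = Re (cinner (A x) x) / c" for x
    unfolding B_def by (simp add: cinner_scaleR_left)
  have ReB0: "Re (cinner (B x) x) \<ge> 0" for x using PA c unfolding ReB posf_def by simp
  have ReB1: "Re (cinner (B x) x) \<le> (norm x)\<^sup>2" for x using ReA[of x] c unfolding ReB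
    by (simp add: divide_le_eq mult.commute)
  have HC: "herm C" unfolding herm_def C_def B_def
    using HA unfolding herm_def by (simp add: cinner_diff_left cinner_diff_right cinner_scaleR_left cinner_scaleR_right)
  have PC: "posf C" unfolding posf_def
  proof
    fix x
    have "Im (cinner (C x) x) = - Im (cinner (A x) x) / c"
      unfolding C_def B_def by (simp add: cinner_diff_left cinner_scaleR_left cinner_self_Im)
    then have "Im (cinner (C x) x) = 0" using PA unfolding posf_def by simp
    moreover have "Re (cinner (C x) x) = (norm x)\<^sup>2 - Re (cinner (B x) x)"
      unfolding C_def by (simp add: cinner_diff_left cinner_self_Re)
    ultimately show "Im (cinner (C x) x) = 0 \<and> Re (cinner (C x) x) \<ge> 0" using ReB1[of x] by simp
  qed
  have BC: "bnd C 1" unfolding bnd_def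
  proof
    fix x
    have "(norm (B x))\<^sup>2 \<le> Re (cinner (B x) x)"
    proof -
      have "(norm (A x))\<^sup>2 \<le> c * Re (cinner (A x) x)" by (rule gen_cs[OF LA HA PA c(2) c(1)])
      then have "(norm (A x))\<^sup>2 / c\<^sup>2 \<le> Re (cinner (A x) x) / c" using c
        by (simp add: field_simps power2_eq_square)
      then show ?thesis unfolding ReB unfolding B_def using c
        by (simp add: power_divide power_mult_distrib abs_of_pos)
    qed
    moreover have "(norm (x + - B x))\<^sup>2 = (norm x)\<^sup>2 + (norm (B x))\<^sup>2 - 2 * Re (cinner (B x) x)"
      using norm_expand[of x "- B x"] by (simp add: cinner_minus_right cinner_commute[of x "B x"])
    ultimately have "(norm (C x))\<^sup>2 \<le> (norm x)\<^sup>2" unfolding C_def using ReB0[of x] by simp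
    then have "norm (C x) \<le> norm x" by (rule power2_le_imp_le) simp
    then show "norm (C x) \<le> 1 * norm x" by simp
  qed
  interpret S: sqc C using LC HC PC BC by unfold_locales
  define Q where "Q = (\<lambda>x. scaleR (sqrt c) (x - S.Yl x))"
  have LY: "clinear_op S.Yl" by (rule S.Yl_lin)
  have LQ: "clinear_op Q" unfolding Q_def clinear_op_def
  proof (intro conjI allI)
    fix x y show "scaleR (sqrt c) (x + y - S.Yl (x + y)) = scaleR (sqrt c) (x - S.Yl x) + scaleR (sqrt c) (y - S.Yl y)"
      by (simp add: clinear_add[OF LY] algebra_simps)
  next
    fix a x
    have "scaleR (sqrt c) (scaleC a x - S.Yl (scaleC a x)) = scaleR (sqrt c) (scaleC a (x - S.Yl x))"
      by (simp add: clinear_scaleC[OF LY] scaleC_diff_right)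
    also have "\<dots> = scaleC a (scaleR (sqrt c) (x - S.Yl x))"
      by (simp add: scaleR_scaleC scaleC_scaleC mult.commute)
    finally show "scaleR (sqrt c) (scaleC a x - S.Yl (scaleC a x)) = scaleC a (scaleR (sqrt c) (x - S.Yl x))" .
  qed
  have BQ: "norm (Q x) \<le> (2 * sqrt c) * norm x" for x
  proof -
    have "norm (x - S.Yl x) \<le> norm x + norm (S.Yl x)" by (rule norm_triangle_ineq4)
    also have "\<dots> \<le> norm x + norm x" using S.Yl_bnd unfolding bnd_def by (metis add_left_mono mult_1)
    finally show ?thesis unfolding Q_def using c by (simp add: mult_left_mono)
  qed
  have PosQ: "positive_op Q" unfolding positive_op_def bounded_op_def
  proof (intro conjI LQ exI allI)
    fix x show "norm (Q x) \<le> (2 * sqrt c) * norm x" by (rule BQ)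
  next
    fix x
    have "Im (cinner (Q x) x) = sqrt c * (Im (cinner x x) - Im (cinner (S.Yl x) x))"
      unfolding Q_def by (simp add: cinner_scaleR_left cinner_diff_left)
    then show "Im (cinner (Q x) x) = 0" using herm_Im[OF S.Yl_herm] by (simp add: cinner_self_Im)
  next
    fix x
    have "Re (cinner (S.Yl x) x) \<le> cmod (cinner (S.Yl x) x)" by (rule complex_Re_le_cmod)
    also have "\<dots> \<le> norm (S.Yl x) * norm x" by (rule cinner_cs)
    also have "\<dots> \<le> norm x * norm x" using S.Yl_bnd unfolding bnd_def
      by (intro mult_right_mono) (auto simp: mult_1[of "norm x"])
    finally have "Re (cinner (S.Yl x) x) \<le> (norm x)\<^sup>2" by (simp add: power2_eq_square)
    moreover have "Re (cinner (Q x) x) = sqrt c * ((norm x)\<^sup>2 - Re (cinner (S.Yl x) x))"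
      unfolding Q_def by (simp add: cinner_scaleR_left cinner_diff_left cinner_self_Re)
    ultimately show "Re (cinner (Q x) x) \<ge> 0" using c by simp
  qed
  have QQ: "Q (Q x) = A x" for x
  proof -
    have "Q (Q x) = scaleR c ((x - S.Yl x) - S.Yl (x - S.Yl x))"
      unfolding Q_def using c by (simp add: clinear_diff[OF LY] clinear_scaleR[OF LY] scaleR_diff_right)
    also have "(x - S.Yl x) - S.Yl (x - S.Yl x) = x - scaleR 2 (S.Yl x) + S.Yl (S.Yl x)"
      by (simp add: clinear_diff[OF LY] scaleR_2)
    also have "S.Yl (S.Yl x) = scaleR 2 (S.Yl x) - C x"
    proof -
      from S.Yl_fix[of x] have "scaleR 2 (S.Yl x) = scaleR 2 (scaleR (1/2) (C x) + scaleR (1/2) (S.Yl (S.Yl x)))"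
        by (rule arg_cong)
      also have "\<dots> = C x + S.Yl (S.Yl x)" by (simp only: scaleR_add_right scaleR_scaleR) simp
      finally have h: "scaleR 2 (S.Yl x) = C x + S.Yl (S.Yl x)" .
      have "S.Yl (S.Yl x) = (C x + S.Yl (S.Yl x)) - C x" by simp
      also have "\<dots> = scaleR 2 (S.Yl x) - C x" by (simp only: h)
      finally show ?thesis .
    qed
    also have "x - scaleR 2 (S.Yl x) + (scaleR 2 (S.Yl x) - C x) = B x" unfolding C_def by simp
    finally show ?thesis unfolding B_def using c by simp
  qed
  have comm: "\<forall>x. Q' (Q x) = Q (Q' x)" if Q': "positive_op Q'" and QQ': "\<forall>x. Q' (Q' x) = A x" for Q'
  proof
    fix x
    have LQ': "clinear_op Q'" using Q' unfolding positive_op_def bounded_op_def by auto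
    obtain c' where c': "c' > 0" "bnd Q' c'" using bounded_op_bnd Q' unfolding positive_op_def by blast
    have QA: "Q' (A z) = A (Q' z)" for z using QQ' by metis
    have QC: "Q' (C z) = C (Q' z)" for z
      unfolding C_def B_def by (simp add: clinear_diff[OF LQ'] clinear_scaleR[OF LQ'] QA)
    have "Q' (S.Yl x) = S.Yl (Q' x)" by (rule S.Yl_comm[OF LQ' c'(2) QC])
    then show "Q' (Q x) = Q (Q' x)" unfolding Q_def
      by (simp add: clinear_diff[OF LQ'] clinear_scaleR[OF LQ'])
  qed
  show ?thesis using PosQ QQ comm by blast
qed

lemma op_sqrt_props:
  fixes A :: "'a::chilbert_space \<Rightarrow> 'a"
  assumes A: "positive_op A"
  shows "positive_op (op_sqrt A)" "\<And>x. op_sqrt A (op_sqrt A x) = A x"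
proof -
  obtain Q where Q: "positive_op Q" "\<And>x. Q (Q x) = A x"
    and comm: "\<And>Q'. positive_op Q' \<Longrightarrow> (\<forall>x. Q' (Q' x) = A x) \<Longrightarrow> (\<forall>x. Q' (Q x) = Q (Q' x))"
    using sqrt_exists[OF A] by blast
  have "op_sqrt A = Q" unfolding op_sqrt_def
  proof (rule the_equality)
    show "positive_op Q \<and> Q \<circ> Q = A" using Q by auto
  next
    fix R assume R: "positive_op R \<and> R \<circ> R = A"
    then have RR: "\<And>x. R (R x) = A x" by (metis comp_apply)
    show "R = Q" by (rule sqrt_unique[OF Q(1) Q(2) _ RR, symmetric]) (use R comm RR in auto)
  qed
  then show "positive_op (op_sqrt A)" "\<And>x. op_sqrt A (op_sqrt A x) = A x" using Q by auto
qed

lemma op_sqrt_norm: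
  fixes A :: "'a::chilbert_space \<Rightarrow> 'a"
  assumes A: "positive_op A"
  shows "(norm (op_sqrt A x))\<^sup>2 = Re (cinner (A x) x)"
proof -
  have H: "herm (op_sqrt A)" using positive_op_herm op_sqrt_props(1)[OF A] by blast
  have "cinner (A x) x = cinner (op_sqrt A (op_sqrt A x)) x" by (simp add: op_sqrt_props(2)[OF A])
  also have "\<dots> = cinner (op_sqrt A x) (op_sqrt A x)" using H unfolding herm_def by blast
  finally show ?thesis by (simp add: cinner_self_Re)
qed

lemma op_sqrt_lin:
  fixes A :: "'a::chilbert_space \<Rightarrow> 'a"
  assumes A: "positive_op A"
  shows "clinear_op (op_sqrt A)"
  using op_sqrt_props(1)[OF A] unfolding positive_op_def bounded_op_def by blast


lemma qb_iff_lower: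
  fixes G :: "'a::complex_inner \<Rightarrow> 'b::complex_inner" and P :: "'a \<Rightarrow> 'c::complex_inner"
  assumes LG: "clinear_op G" and LP: "clinear_op P"
  shows "quotient_op_bounded G P \<longleftrightarrow> (\<exists>A'>0. \<forall>f. A' * (norm (G f))\<^sup>2 \<le> (norm (P f))\<^sup>2)"
proof
  assume "quotient_op_bounded G P"
  then obtain C where C: "C > 0" "\<forall>f. norm (G f) \<le> C * norm (P f)"
    unfolding quotient_op_bounded_def by blast
  have "\<forall>f. (1 / C\<^sup>2) * (norm (G f))\<^sup>2 \<le> (norm (P f))\<^sup>2"
  proof
    fix f
    have "(norm (G f))\<^sup>2 \<le> (C * norm (P f))\<^sup>2" using C by (intro power_mono) auto
    then show "(1 / C\<^sup>2) * (norm (G f))\<^sup>2 \<le> (norm (P f))\<^sup>2" using C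
      by (simp add: field_simps power_mult_distrib)
  qed
  moreover have "1 / C\<^sup>2 > 0" using C by simp
  ultimately show "\<exists>A'>0. \<forall>f. A' * (norm (G f))\<^sup>2 \<le> (norm (P f))\<^sup>2" by blast
next
  assume "\<exists>A'>0. \<forall>f. A' * (norm (G f))\<^sup>2 \<le> (norm (P f))\<^sup>2"
  then obtain A' where A': "A' > 0" "\<And>f. A' * (norm (G f))\<^sup>2 \<le> (norm (P f))\<^sup>2" by blast
  have bnd: "norm (G f) \<le> sqrt (1 / A') * norm (P f)" for f
  proof -
    have "(norm (G f))\<^sup>2 \<le> (1 / A') * (norm (P f))\<^sup>2" using A'(2)[of f] A'(1)
      by (simp add: field_simps)
    then have "sqrt ((norm (G f))\<^sup>2) \<le> sqrt ((1 / A') * (norm (P f))\<^sup>2)" by (rule real_sqrt_le_mono)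
    also have "sqrt ((1 / A') * (norm (P f))\<^sup>2) = sqrt (1 / A') * norm (P f)"
      by (simp only: real_sqrt_mult real_sqrt_abs abs_norm_cancel)
    finally show ?thesis by simp
  qed
  have wd: "P f = P g \<longrightarrow> G f = G g" for f g
  proof
    assume "P f = P g"
    then have "P (f - g) = 0" by (simp add: clinear_diff[OF LP])
    then have "norm (G (f - g)) \<le> 0" using bnd[of "f - g"] by simp
    then show "G f = G g" by (simp add: clinear_diff[OF LG])
  qed
  have "sqrt (1 / A') > 0" using A'(1) by simp
  then have "\<exists>C>0. \<forall>f. norm (G f) \<le> C * norm (P f)" using bnd by blast
  moreover have "\<forall>f g. P f = P g \<longrightarrow> G f = G g" using wd by blast
  ultimately show "quotient_op_bounded G P" unfolding quotient_op_bounded_def by blast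
qed

lemma qb_norm_eq:
  fixes G :: "'a::complex_inner \<Rightarrow> 'b::complex_inner" and P :: "'a \<Rightarrow> 'c::complex_inner" and P' :: "'a \<Rightarrow> 'd::complex_inner"
  assumes LG: "clinear_op G" and LP: "clinear_op P" and LP': "clinear_op P'"
    and eq: "\<And>f. norm (P f) = norm (P' f)"
  shows "quotient_op_bounded G P \<longleftrightarrow> quotient_op_bounded G P'"
  using qb_iff_lower[OF LG LP] qb_iff_lower[OF LG LP'] eq by simp

lemma image_csub:
  fixes V :: "'a::chilbert_space \<Rightarrow> 'a"
  assumes V: "invertible_op V" and F: "closed_csubspace F"
  shows "closed_csubspace (V ` F)"
proof -
  have LV: "clinear_op V" and bij: "bij V" and Bi: "bounded_op (inv V)"
    using V unfolding invertible_op_def bounded_op_def by auto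
  obtain c where c: "c > 0" "bnd (inv V) c" using bounded_op_bnd[OF Bi] by blast
  have Li: "clinear_op (inv V)" using Bi unfolding bounded_op_def by auto
  have iv: "inv V (V y) = y" for y using bij by (simp add: bij_def)
  have vi: "V (inv V y) = y" for y using bij by (simp add: bij_def surj_f_inv_f)
  have "closed (V ` F)"
  proof (rule closed_sequential_limits[THEN iffD2], intro allI impI, elim conjE)
    fix f l assume f: "\<forall>n. f n \<in> V ` F" and fl: "f \<longlonglongrightarrow> l"
    have "(\<lambda>n. inv V (f n)) \<longlonglongrightarrow> inv V l" by (rule tendsto_clin[OF Li c(2) fl])
    moreover have "\<forall>n. inv V (f n) \<in> F"
    proof
      fix n
      obtain y where "y \<in> F" "f n = V y" using f by blast
      then show "inv V (f n) \<in> F" using iv by simp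
    qed
    moreover have "closed F" using F unfolding closed_csubspace_def by blast
    ultimately have "inv V l \<in> F" using closed_sequentially[of F "\<lambda>n. inv V (f n)" "inv V l"] by blast
    then show "l \<in> V ` F" by (rule image_eqI[where f=V and x="inv V l", OF vi[of l, symmetric]])
  qed
  moreover have "0 \<in> V ` F"
  proof (rule image_eqI)
    show "0 = V 0" using clinear_0[OF LV] by simp
    show "0 \<in> F" using F unfolding closed_csubspace_def by blast
  qed
  moreover have "\<forall>x\<in>V ` F. \<forall>y\<in>V ` F. x + y \<in> V ` F"
    using F clinear_add[OF LV] unfolding closed_csubspace_def by (auto intro!: image_eqI[where x="_ + _"])
  moreover have "\<forall>a. \<forall>x\<in>V ` F. scaleC a x \<in> V ` F"
    using F clinear_scaleC[OF LV] unfolding closed_csubspace_def by (auto intro!: image_eqI[where x="scaleC _ _"])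
  ultimately show ?thesis unfolding closed_csubspace_def by blast
qed

lemma proj_adj_lemma:
  fixes V :: "'a::chilbert_space \<Rightarrow> 'a"
  assumes V: "invertible_op V" and F: "closed_csubspace F"
  shows "proj F (adj V (proj (V ` F) z)) = proj F (adj V z)"
proof -
  have BV: "bounded_op V" using V unfolding invertible_op_def by auto
  have LW: "clinear_op (adj V)" by (rule adj_clinear[OF BV])
  have VF: "closed_csubspace (V ` F)" by (rule image_csub[OF V F])
  define w where "w = z - proj (V ` F) z"
  have worth: "cinner (adj V w) m = 0" if m: "m \<in> F" for m
  proof -
    have "cinner w (V m) = 0" unfolding w_def using proj_props(2)[OF VF] m by blast
    then have "cinner (V m) w = 0" by (subst cinner_commute) simp
    then have "cinner m (adj V w) = 0" by (simp add: adj_prop[OF BV])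
    then show ?thesis by (subst cinner_commute) simp
  qed
  show ?thesis
  proof (rule proj_eqI[OF F proj_props(1)[OF F]])
    fix m assume m: "m \<in> F"
    have "adj V (proj (V ` F) z) = adj V z - adj V w" unfolding w_def by (simp add: clinear_diff[OF LW])
    then have "adj V (proj (V ` F) z) - proj F (adj V z) = (adj V z - proj F (adj V z)) - adj V w"
      by simp
    then have "cinner (adj V (proj (V ` F) z) - proj F (adj V z)) m
        = cinner (adj V z - proj F (adj V z)) m - cinner (adj V w) m"
      by (simp only: cinner_diff_left)
    also have "\<dots> = 0" using proj_props(2)[OF F m] worth[OF m] by simp
    finally show "cinner (adj V (proj (V ` F) z) - proj F (adj V z)) m = 0" .
  qed
qed


theorem theorem3p13:
  fixes M :: "'x measure"
    and v :: "'x \<Rightarrow> real"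
    and F :: "'x \<Rightarrow> 'a::chilbert_space set"
    and \<Lambda> :: "'x \<Rightarrow> 'a \<Rightarrow> 'k::chilbert_space"
    and T U K V S :: "'a \<Rightarrow> 'a"
  assumes separable: "\<exists>D::'a set. countable D \<and> closure D = UNIV"
    and v_meas: "v \<in> borel_measurable M"
    and v_pos: "\<And>x. x \<in> space M \<Longrightarrow> v x > 0"
    and F_closed: "\<And>x. x \<in> space M \<Longrightarrow> closed_csubspace (F x)"
    and F_weak_meas: "\<And>f g. (\<lambda>x. cinner (proj (F x) f) g) \<in> borel_measurable M"
    and \<Lambda>_bounded: "\<And>x. x \<in> space M \<Longrightarrow> bounded_op (\<Lambda> x)"
    and T: "pos_invertible_op T"
    and U: "pos_invertible_op U"
    and K: "bounded_op K"
    and frame: "ctrl_L_gfusion_frame M v F \<Lambda> T U K"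
    and S: "is_ctrl_frame_operator M v F \<Lambda> T U S"
    and S_pos: "positive_op S"
    and V: "invertible_op V"
    and VT: "adj V \<circ> T = T \<circ> adj V"
    and VU: "adj V \<circ> U = U \<circ> adj V"
  shows "(ctrl_L_gfusion_frame M v (\<lambda>x. V ` F x) (\<lambda>x. \<Lambda> x \<circ> proj (F x) \<circ> adj V) T U (V \<circ> K)
           \<longleftrightarrow> quotient_op_bounded (adj (V \<circ> K)) (op_sqrt S \<circ> adj V))
       \<and> (quotient_op_bounded (adj (V \<circ> K)) (op_sqrt S \<circ> adj V)
           \<longleftrightarrow> quotient_op_bounded (adj (V \<circ> K)) (op_sqrt (V \<circ> S \<circ> adj V)))"
proof -
  define W where "W = adj V"
  have BV: "bounded_op V" using V unfolding invertible_op_def by auto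
  have BW: "bounded_op W" unfolding W_def by (rule adj_bounded[OF BV])
  have LW: "clinear_op W" using BW unfolding bounded_op_def by auto
  obtain cW where cW: "cW > 0" "bnd W cW" using bounded_op_bnd[OF BW] by blast
  have BT: "bounded_op T" using T unfolding pos_invertible_op_def positive_op_def by auto
  have BVK: "bounded_op (V \<circ> K)" by (rule bounded_op_comp[OF BV K])
  define G where "G = adj (V \<circ> K)"
  have LG: "clinear_op G" unfolding G_def by (rule adj_clinear[OF BVK])
  define orig where "orig = (\<lambda>g. cgf_integrand v F \<Lambda> T U g)"
  define new where "new = (\<lambda>f. cgf_integrand v (\<lambda>x. V ` F x) (\<lambda>x. \<Lambda> x \<circ> proj (F x) \<circ> adj V) T U f)"
  obtain A B where AB: "0 < A" "A \<le> B"
    and fr: "\<And>g. integrable M (orig g) \<and> Im (integral\<^sup>L M (orig g)) = 0 \<and>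
       A * (norm (adj K g))\<^sup>2 \<le> Re (integral\<^sup>L M (orig g)) \<and> Re (integral\<^sup>L M (orig g)) \<le> B * (norm g)\<^sup>2"
    using frame unfolding ctrl_L_gfusion_frame_def orig_def by blast
  have Sform: "cinner (S g) g = integral\<^sup>L M (orig g)" for g
  proof -
    have "cinner (S g) g = (LINT x|M. complex_of_real ((v x)\<^sup>2) *
           cinner (adj T (proj (F x) (adj (\<Lambda> x) (\<Lambda> x (proj (F x) (U g)))))) g)"
      using S unfolding is_ctrl_frame_operator_def by blast
    also have "\<dots> = integral\<^sup>L M (orig g)"
    proof (rule Bochner_Integration.integral_cong[OF refl])
      fix x assume x: "x \<in> space M"
      have "cinner (adj T (proj (F x) (adj (\<Lambda> x) (\<Lambda> x (proj (F x) (U g)))))) g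
          = cinner (proj (F x) (adj (\<Lambda> x) (\<Lambda> x (proj (F x) (U g))))) (T g)"
        by (rule adj_prop2[OF BT])
      also have "\<dots> = cinner (adj (\<Lambda> x) (\<Lambda> x (proj (F x) (U g)))) (proj (F x) (T g))"
        by (rule proj_selfadj[OF F_closed[OF x]])
      also have "\<dots> = cinner (\<Lambda> x (proj (F x) (U g))) (\<Lambda> x (proj (F x) (T g)))"
        by (rule adj_prop2[OF \<Lambda>_bounded[OF x]])
      finally show "complex_of_real ((v x)\<^sup>2) *
           cinner (adj T (proj (F x) (adj (\<Lambda> x) (\<Lambda> x (proj (F x) (U g)))))) g = orig g x"
        unfolding orig_def cgf_integrand_def by simp
    qed
    finally show ?thesis .
  qed
  have Ival: "Re (integral\<^sup>L M (orig g)) = (norm (op_sqrt S g))\<^sup>2" for g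
    using op_sqrt_norm[OF S_pos, of g] Sform[of g] by simp
  have newpt: "new f x = orig (W f) x" if x: "x \<in> space M" for f x
  proof -
    have WU: "W (U f) = U (W f)" using fun_cong[OF VU, of f] unfolding W_def by simp
    have WT: "W (T f) = T (W f)" using fun_cong[OF VT, of f] unfolding W_def by simp
    show ?thesis unfolding new_def orig_def cgf_integrand_def
      using proj_adj_lemma[OF V F_closed[OF x], of "U f"] proj_adj_lemma[OF V F_closed[OF x], of "T f"]
      by (simp add: W_def[symmetric] WU WT)
  qed
  have newint: "integrable M (new f) \<longleftrightarrow> integrable M (orig (W f))" for f
    by (rule Bochner_Integration.integrable_cong[OF refl]) (rule newpt)
  have newI: "integral\<^sup>L M (new f) = integral\<^sup>L M (orig (W f))" for f
    by (rule Bochner_Integration.integral_cong[OF refl]) (rule newpt)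
  have P1: "ctrl_L_gfusion_frame M v (\<lambda>x. V ` F x) (\<lambda>x. \<Lambda> x \<circ> proj (F x) \<circ> adj V) T U (V \<circ> K)
      \<longleftrightarrow> (\<exists>A'>0. \<forall>f. A' * (norm (G f))\<^sup>2 \<le> (norm ((op_sqrt S \<circ> adj V) f))\<^sup>2)"
  proof
    assume "ctrl_L_gfusion_frame M v (\<lambda>x. V ` F x) (\<lambda>x. \<Lambda> x \<circ> proj (F x) \<circ> adj V) T U (V \<circ> K)"
    then obtain A' where A': "A' > 0" "\<And>f. A' * (norm (G f))\<^sup>2 \<le> Re (integral\<^sup>L M (new f))"
      unfolding ctrl_L_gfusion_frame_def new_def G_def by blast
    have "\<forall>f. A' * (norm (G f))\<^sup>2 \<le> (norm ((op_sqrt S \<circ> adj V) f))\<^sup>2"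
      using A'(2) by (simp add: newI Ival W_def)
    then show "\<exists>A'>0. \<forall>f. A' * (norm (G f))\<^sup>2 \<le> (norm ((op_sqrt S \<circ> adj V) f))\<^sup>2" using A'(1) by blast
  next
    assume "\<exists>A'>0. \<forall>f. A' * (norm (G f))\<^sup>2 \<le> (norm ((op_sqrt S \<circ> adj V) f))\<^sup>2"
    then obtain A' where A': "A' > 0" "\<And>f. A' * (norm (G f))\<^sup>2 \<le> (norm ((op_sqrt S \<circ> adj V) f))\<^sup>2"
      by blast
    define B' where "B' = max A' (B * cW\<^sup>2)"
    have "\<forall>f. integrable M (new f) \<and> Im (integral\<^sup>L M (new f)) = 0 \<and>
        A' * (norm (G f))\<^sup>2 \<le> Re (integral\<^sup>L M (new f)) \<and> Re (integral\<^sup>L M (new f)) \<le> B' * (norm f)\<^sup>2"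
    proof
      fix f
      have i: "integrable M (new f)" using fr[of "W f"] newint by blast
      have im: "Im (integral\<^sup>L M (new f)) = 0" using fr[of "W f"] newI by simp
      have lo: "A' * (norm (G f))\<^sup>2 \<le> Re (integral\<^sup>L M (new f))"
        using A'(2)[of f] by (simp add: newI Ival W_def)
      have "Re (integral\<^sup>L M (new f)) \<le> B * (norm (W f))\<^sup>2" using fr[of "W f"] newI by simp
      also have "\<dots> \<le> B * (cW * norm f)\<^sup>2"
        using cW AB unfolding bnd_def by (intro mult_left_mono power_mono) auto
      also have "\<dots> = (B * cW\<^sup>2) * (norm f)\<^sup>2" by (simp add: power_mult_distrib)
      also have "\<dots> \<le> B' * (norm f)\<^sup>2" unfolding B'_def by (intro mult_right_mono) auto
      finally show "integrable M (new f) \<and> Im (integral\<^sup>L M (new f)) = 0 \<and>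
        A' * (norm (G f))\<^sup>2 \<le> Re (integral\<^sup>L M (new f)) \<and> Re (integral\<^sup>L M (new f)) \<le> B' * (norm f)\<^sup>2"
        using i im lo by blast
    qed
    moreover have "A' \<le> B'" unfolding B'_def by simp
    ultimately show "ctrl_L_gfusion_frame M v (\<lambda>x. V ` F x) (\<lambda>x. \<Lambda> x \<circ> proj (F x) \<circ> adj V) T U (V \<circ> K)"
      unfolding ctrl_L_gfusion_frame_def new_def G_def using A'(1) by blast
  qed
  have LSW: "clinear_op (op_sqrt S \<circ> adj V)"
    using op_sqrt_lin[OF S_pos] LW unfolding W_def clinear_op_def by simp
  have Q1: "quotient_op_bounded G (op_sqrt S \<circ> adj V) \<longleftrightarrow>
      (\<exists>A'>0. \<forall>f. A' * (norm (G f))\<^sup>2 \<le> (norm ((op_sqrt S \<circ> adj V) f))\<^sup>2)"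
    by (rule qb_iff_lower[OF LG LSW])
  have PVSW: "positive_op (V \<circ> S \<circ> adj V)"
  proof -
    have BS: "bounded_op S" using S_pos unfolding positive_op_def by auto
    have b: "bounded_op (V \<circ> S \<circ> adj V)" by (intro bounded_op_comp BV BS BW[unfolded W_def])
    have "cinner ((V \<circ> S \<circ> adj V) x) x = cinner (S (W x)) (W x)" for x
      by (simp add: adj_prop[OF BV] W_def)
    then show ?thesis using b S_pos unfolding positive_op_def by simp
  qed
  have LVSW: "clinear_op (op_sqrt (V \<circ> S \<circ> adj V))" by (rule op_sqrt_lin[OF PVSW])
  have normeq: "norm ((op_sqrt S \<circ> adj V) f) = norm (op_sqrt (V \<circ> S \<circ> adj V) f)" for f
  proof -
    have "(norm (op_sqrt (V \<circ> S \<circ> adj V) f))\<^sup>2 = Re (cinner ((V \<circ> S \<circ> adj V) f) f)"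
      by (rule op_sqrt_norm[OF PVSW])
    also have "cinner ((V \<circ> S \<circ> adj V) f) f = cinner (S (W f)) (W f)"
      by (simp add: adj_prop[OF BV] W_def)
    also have "Re \<dots> = (norm (op_sqrt S (W f)))\<^sup>2" by (rule op_sqrt_norm[OF S_pos, symmetric])
    finally have h: "(norm (op_sqrt (V \<circ> S \<circ> adj V) f))\<^sup>2 = (norm (op_sqrt S (W f)))\<^sup>2" .
    have "norm (op_sqrt (V \<circ> S \<circ> adj V) f) = norm (op_sqrt S (W f))"
      using h power2_eq_iff_nonneg[OF norm_ge_zero norm_ge_zero] by blast
    then show ?thesis unfolding W_def comp_apply by (rule sym)
  qed
  have P2: "quotient_op_bounded G (op_sqrt S \<circ> adj V) \<longleftrightarrow> quotient_op_bounded G (op_sqrt (V \<circ> S \<circ> adj V))"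
    by (rule qb_norm_eq[OF LG LSW LVSW normeq])
  show ?thesis using P1 Q1 P2 unfolding G_def by blast
qed


end
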